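(* Assume (A0)–(A3) and let $\{(x^k,\lambda^k)\}$ be generated by the NEPJ-ADMM. For every $k\ge1$, with $\Theta_\lambda^k:=\frac{1}{\beta\theta}\|\Delta\lambda^k\|^2+\frac{c_1}{2}\big(\|A_p^*\Delta\lambda^k\|^2-\|A_p^*\Delta\lambda^{k-1}\|^2\big)$, $$\Theta_\lambda^k\le\frac{\gamma_\theta}{\beta\sigma^+_{A_p}}\|u^k\|^2\le\frac{\gamma_\theta(p+1)}{\beta\sigma^+_{A_p}}\Big[\sum_{j=1}^{p-1}\beta^2\|A_p^*A_j\|^2\big(\|\Delta x_j^k\|+\|\Delta x_j^{k-1}\|\big)^2+(L_p^2+M_p^2)\big(\|\Delta x_p^k\|+\|\Delta x_p^{k-1}\|\big)^2\Big].$$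
   Context: Problem: let $p\ge2$, $f_i:\mathbb{R}^{n_i}\to(-\infty,\infty]$ ($i=1,\dots,p$), $A_i\in\mathbb{R}^{d\times n_i}$, $b\in\mathbb{R}^d$, and consider $\min\{\sum_{i=1}^pf_i(x_i):\sum_{i=1}^pA_ix_i=b\}$. For $\beta>0$ the augmented Lagrangian is $\mathcal{L}_\beta(x_1,\dots,x_p,\lambda)=\sum_{i=1}^pf_i(x_i)-\langle\lambda,\sum_{i=1}^pA_ix_i-b\rangle+\frac\beta2\|\sum_{i=1}^pA_ix_i-b\|^2$. Standing assumptions: (A0) $f_1,\dots,f_{p-1}$ are proper lower semicontinuous; (A1) $A_p\ne0$ and $\mathrm{Im}(A_p)\supseteq\{b\}\cup\mathrm{Im}(A_1)\cup\dots\cup\mathrm{Im}(A_{p-1})$; (A2) $f_p:\mathbb{R}^{n_p}\to\mathbb{R}$ is differentiable with $L_p$-Lipschitz gradient; (A3) there is $\bar\beta\ge0$ with $v(\bar\beta)>-\infty$, where $v(\beta):=\inf_{x}\{\sum_{i=1}^pf_i(x_i)+\frac\beta2\|\sum_{i=1}^pA_ix_i-b\|^2\}$. $A^*$ is the transpose; $\sigma^+_{A_p}$ is the smallest positive eigenvalue of $A_p^*A_p$. Distance generating functions: for $Z\subseteq\mathbb{R}^s$ and $0<m\le M$, $\mathcal{D}_Z(m,M)$ is the class of real-valued functions $w$ differentiable on $Z$ with $w(z')-w(z)-\langle\nabla w(z),z'-z\rangle\ge\frac m2\|z'-z\|^2$ and $\|\nabla w(z)-\nabla w(z')\|\le M\|z-z'\|$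 for all $z,z'\in Z$; its Bregman distance is $(dw)_z(z'):=w(z')-w(z)-\langle\nabla w(z),z'-z\rangle$ for $z\in Z$, $z'\in\mathbb{R}^s$. NEPJ-ADMM: let $Z_i=\mathrm{dom} f_i$, $\gamma_\theta:=\theta/(1-|\theta-1|)^2$. Pick $(x_1^0,\dots,x_p^0,\lambda^0)\in Z_1\times\dots\times Z_p\times\mathbb{R}^d$, $\alpha>0$, $\beta\ge\bar\beta$ with $\beta>0$, $M_i\ge m_i>0$, $\theta\in(0,2)$ such that $\delta_i:=\frac{m_i}{4}-\big(\frac{p-2+\alpha}{2}+\frac{2\gamma_\theta(p+1)}{\sigma^+_{A_p}}\|A_p^*\|^2\big)\beta\max_{1\le l\le p-1}\|A_l\|^2>0$ for $i=1,\dots,p-1$ and $\delta_p:=\frac{m_p}{4}-\big(\frac{\beta(p-1)\|A_p\|^2}{2\alpha}+\frac{\gamma_\theta(p+1)(L_p^2+2M_p^2)}{\beta\sigma^+_{A_p}}\big)>0$. For $k\ge1$: for each $i$ choose $w_i^k\in\mathcal{D}_{Z_i}(m_i,M_i)$ and let $x_i^k$ be an optimal solution (assumed to exist) of $\min_{x_i}\{\mathcal{L}_\beta(x^{k-1}_{<i},x_i,x^{k-1}_{>i},\lambda^{k-1})+(dw_i^k)_{x_i^{k-1}}(x_i)\}$, where $(x_{<i},x_i,x_{>i})$ denotes $(x_1,\dots,x_p)$ with the $i$-th block singled out; then set $\lambda^k=\lambda^{k-1}-\theta\beta(\sum_{i=1}^pA_ix_i^k-b)$. Write $x^k=(x_1^k,\dots,x_p^k)$.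 Notation: for $k\ge1$, $\Delta x_i^k:=x_i^k-x_i^{k-1}$, $\Delta\lambda^k:=\lambda^k-\lambda^{k-1}$, $\Delta w_i^k:=\nabla w_i^k(x_i^k)-\nabla w_i^k(x_i^{k-1})$, $R_p^k:=-\sum_{j=1}^{p-1}\beta A_p^*A_j\Delta x_j^k+\Delta w_p^k$; $R_p^0:=A_p^*\lambda^0-\nabla f_p(x_p^0)$; $u^k:=\nabla f_p(x_p^k)-\nabla f_p(x_p^{k-1})+R_p^k-R_p^{k-1}$ for $k\ge1$; conventions $\Delta\lambda^0:=0$, $\Delta x_i^0:=0$ for $i=1,\dots,p-1$, $\Delta x_p^0:=R_p^0/M_p$. $c_1:=\frac{2|\theta-1|}{\beta\theta(1-|\theta-1|)\sigma^+_{A_p}}$. *)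

theory Defs
  imports "HOL-Analysis.Analysis" "Jordan_Normal_Form.Matrix" "Jordan_Normal_Form.Char_Poly"
begin

text \<open>Vectors of R^s are represented by JNF vectors of dimension s (real vec with
  v in carrier_vec s); a d x n real matrix is an element of carrier_mat d n.
  The adjoint A^* is the transpose.\<close>

definition vnorm :: "real vec \<Rightarrow> real" where
  "vnorm v = sqrt (v \<bullet> v)"

definition opnorm :: "real mat \<Rightarrow> real" where
  "opnorm A = Sup {vnorm (A *\<^sub>v v) | v. v \<in> carrier_vec (dim_col A) \<and> vnorm v \<le> 1}"

definition sigma_plus :: "real mat \<Rightarrow> real" where
  "sigma_plus A = Min {e. eigenvalue (transpose_mat A * A) e \<and> e > 0}"

definition gamma_theta :: "real \<Rightarrow> real" where
  "gamma_theta \<theta> = \<theta> / (1 - \<bar>\<theta> - 1\<bar>)\<^sup>2"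

definition vsum :: "nat \<Rightarrow> ('c \<Rightarrow> real vec) \<Rightarrow> 'c set \<Rightarrow> real vec" where
  "vsum d g I = finsum_vec TYPE(real) d g I"

definition residual :: "nat \<Rightarrow> nat \<Rightarrow> (nat \<Rightarrow> real mat) \<Rightarrow> real vec \<Rightarrow> (nat \<Rightarrow> real vec) \<Rightarrow> real vec" where
  "residual d p A b xs = vsum d (\<lambda>i. A i *\<^sub>v xs i) {1..p} - b"

definition aug_lagr :: "nat \<Rightarrow> nat \<Rightarrow> (nat \<Rightarrow> real vec \<Rightarrow> ereal) \<Rightarrow> (nat \<Rightarrow> real mat) \<Rightarrow> real vec
    \<Rightarrow> real \<Rightarrow> (nat \<Rightarrow> real vec) \<Rightarrow> real vec \<Rightarrow> ereal" where
  "aug_lagr d p f A b \<beta> xs lam =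
     (\<Sum>i\<in>{1..p}. f i (xs i))
     + ereal (- (lam \<bullet> residual d p A b xs) + \<beta> / 2 * (vnorm (residual d p A b xs))\<^sup>2)"

definition val_fun :: "nat \<Rightarrow> (nat \<Rightarrow> nat) \<Rightarrow> nat \<Rightarrow> (nat \<Rightarrow> real vec \<Rightarrow> ereal) \<Rightarrow> (nat \<Rightarrow> real mat)
    \<Rightarrow> real vec \<Rightarrow> real \<Rightarrow> ereal" where
  "val_fun d n p f A b \<beta> =
     (INF xs\<in>{xs. \<forall>i\<in>{1..p}. xs i \<in> carrier_vec (n i)}.
        (\<Sum>i\<in>{1..p}. f i (xs i)) + ereal (\<beta> / 2 * (vnorm (residual d p A b xs))\<^sup>2))"

definition edom :: "nat \<Rightarrow> (real vec \<Rightarrow> ereal) \<Rightarrow> real vec set" where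
  "edom s g = {z \<in> carrier_vec s. g z < \<infinity>}"

definition proper_fun :: "nat \<Rightarrow> (real vec \<Rightarrow> ereal) \<Rightarrow> bool" where
  "proper_fun s g \<longleftrightarrow> (\<forall>z\<in>carrier_vec s. g z \<noteq> -\<infinity>) \<and> (\<exists>z\<in>carrier_vec s. g z \<noteq> \<infinity>)"

definition lsc_fun :: "nat \<Rightarrow> (real vec \<Rightarrow> ereal) \<Rightarrow> bool" where
  "lsc_fun s g \<longleftrightarrow> (\<forall>z zs. z \<in> carrier_vec s \<longrightarrow> (\<forall>j. zs j \<in> carrier_vec s) \<longrightarrow>
      (\<lambda>j. vnorm (zs j - z)) \<longlonglongrightarrow> 0 \<longrightarrow> g z \<le> liminf (\<lambda>j. g (zs j)))"

definition has_grad :: "nat \<Rightarrow> (real vec \<Rightarrow> real) \<Rightarrow> real vec \<Rightarrow> real vec \<Rightarrow> bool" where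
  "has_grad s g gv z \<longleftrightarrow> gv \<in> carrier_vec s \<and>
     (\<forall>\<epsilon>>0. \<exists>\<delta>>0. \<forall>h\<in>carrier_vec s. vnorm h < \<delta> \<longrightarrow>
        \<bar>g (z + h) - g z - gv \<bullet> h\<bar> \<le> \<epsilon> * vnorm h)"

definition bregman :: "(real vec \<Rightarrow> real) \<Rightarrow> (real vec \<Rightarrow> real vec) \<Rightarrow> real vec \<Rightarrow> real vec \<Rightarrow> real" where
  "bregman w gw z z' = w z' - w z - gw z \<bullet> (z' - z)"

definition dgf_class :: "nat \<Rightarrow> real vec set \<Rightarrow> real \<Rightarrow> real \<Rightarrow> (real vec \<Rightarrow> real) \<Rightarrow> (real vec \<Rightarrow> real vec) \<Rightarrow> bool" where
  "dgf_class s Z m M w gw \<longleftrightarrow>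
     (\<forall>z\<in>Z. has_grad s w (gw z) z) \<and>
     (\<forall>z\<in>Z. \<forall>z'\<in>Z. bregman w gw z z' \<ge> m / 2 * (vnorm (z' - z))\<^sup>2) \<and>
     (\<forall>z\<in>Z. \<forall>z'\<in>Z. vnorm (gw z - gw z') \<le> M * vnorm (z - z'))"

definition Rp :: "nat \<Rightarrow> nat \<Rightarrow> (nat \<Rightarrow> real mat) \<Rightarrow> real \<Rightarrow> (real vec \<Rightarrow> real vec)
    \<Rightarrow> (nat \<Rightarrow> nat \<Rightarrow> real vec \<Rightarrow> real vec) \<Rightarrow> (nat \<Rightarrow> nat \<Rightarrow> real vec) \<Rightarrow> (nat \<Rightarrow> real vec) \<Rightarrow> nat \<Rightarrow> real vec" where
  "Rp np p A \<beta> gradfp gw x lam k =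
     (if k = 0 then transpose_mat (A p) *\<^sub>v lam 0 - gradfp (x 0 p)
      else - vsum np (\<lambda>j. \<beta> \<cdot>\<^sub>v ((transpose_mat (A p) * A j) *\<^sub>v (x k j - x (k-1) j))) {1..p-1}
           + (gw p k (x k p) - gw p k (x (k-1) p)))"

end

theory Submission
  imports Defs
begin

no_notation inner (infix \<open>\<bullet>\<close> 70)
no_notation vec_nth (infixl \<open>$\<close> 90)



lemma sp_self_ge0: "(v::real vec) \<bullet> v \<ge> 0"
  unfolding scalar_prod_def by (auto intro: sum_nonneg)

lemma vnorm_sq: "(vnorm v)\<^sup>2 = v \<bullet> v"
  unfolding vnorm_def using sp_self_ge0 by simp

lemma vnorm_ge0: "vnorm v \<ge> 0" unfolding vnorm_def using sp_self_ge0 by simp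

lemma vnorm_zero[simp]: "vnorm (0\<^sub>v n) = 0"
  unfolding vnorm_def scalar_prod_def by simp

lemma sp_eq0: "(v::real vec) \<bullet> v = 0 \<Longrightarrow> v = 0\<^sub>v (dim_vec v)"
proof -
  assume a: "v \<bullet> v = 0"
  have "\<forall>i\<in>{0..<dim_vec v}. v $ i * v $ i = 0"
    using a unfolding scalar_prod_def by (subst (asm) sum_nonneg_eq_0_iff) auto
  thus ?thesis by (intro eq_vecI) auto
qed

lemma CS: assumes "dim_vec (u::real vec) = dim_vec v"
  shows "(u \<bullet> v)\<^sup>2 \<le> (u \<bullet> u) * (v \<bullet> v)"
  using Cauchy_Schwarz_ineq_sum[of "\<lambda>i. u $ i" "\<lambda>i. v $ i" "{0..<dim_vec v}"] assms
  unfolding scalar_prod_def by (simp add: power2_eq_square)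

lemma CS_abs: assumes "dim_vec (u::real vec) = dim_vec v"
  shows "\<bar>u \<bullet> v\<bar> \<le> vnorm u * vnorm v"
proof -
  have "(u \<bullet> v)\<^sup>2 \<le> (vnorm u * vnorm v)\<^sup>2" using CS[OF assms]
    by (simp add: power_mult_distrib vnorm_sq)
  hence "\<bar>u \<bullet> v\<bar> \<le> \<bar>vnorm u * vnorm v\<bar>" by (simp add: abs_le_square_iff)
  thus ?thesis using vnorm_ge0[of u] vnorm_ge0[of v] by simp
qed

lemma vnorm_add: assumes "u \<in> carrier_vec n" "(v::real vec) \<in> carrier_vec n"
  shows "vnorm (u + v) \<le> vnorm u + vnorm v"
proof -
  have "(u + v) \<bullet> (u + v) = u \<bullet> u + 2 * (u \<bullet> v) + v \<bullet> v"
    using assms by (simp add: add_scalar_prod_distrib scalar_prod_add_distrib comm_scalar_prod[of u n v])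
  also have "\<dots> \<le> (vnorm u + vnorm v)\<^sup>2"
    using CS_abs[of u v] assms by (simp add: power2_sum vnorm_sq)
  finally have "(vnorm (u+v))\<^sup>2 \<le> (vnorm u + vnorm v)\<^sup>2" by (simp add: vnorm_sq)
  thus ?thesis using vnorm_ge0 by (meson add_nonneg_nonneg power2_le_imp_le)
qed

lemma vnorm_smult: "vnorm (c \<cdot>\<^sub>v v) = \<bar>c\<bar> * vnorm (v::real vec)"
proof -
  have "(c \<cdot>\<^sub>v v) \<bullet> (c \<cdot>\<^sub>v v) = c\<^sup>2 * (v \<bullet> v)"
    unfolding scalar_prod_def by (simp add: sum_distrib_left power2_eq_square ac_simps)
  thus ?thesis unfolding vnorm_def by (simp add: real_sqrt_mult)
qed

lemma vnorm_uminus: "vnorm (- v) = vnorm (v::real vec)"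
proof -
  have "(- v) \<bullet> (- v) = v \<bullet> v" unfolding scalar_prod_def by simp
  thus ?thesis unfolding vnorm_def by simp
qed

lemma vnorm_minus: assumes "u \<in> carrier_vec n" "(v::real vec) \<in> carrier_vec n"
  shows "vnorm (u - v) \<le> vnorm u + vnorm v"
proof -
  have "u - v = u + (- v)" using assms by auto
  thus ?thesis using vnorm_add[of u n "-v"] assms vnorm_uminus by auto
qed

lemma opnorm_bdd: assumes M: "M \<in> carrier_mat r c"
  shows "bdd_above {vnorm (M *\<^sub>v v) | v. v \<in> carrier_vec (dim_col M) \<and> vnorm v \<le> 1}"
proof -
  define K where "K = sqrt (\<Sum>i\<in>{0..<r}. (vnorm (row M i))\<^sup>2)"
  have key: "vnorm (M *\<^sub>v v) \<le> K" if v: "v \<in> carrier_vec c" "vnorm v \<le> 1" for v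
  proof -
    have dimMv: "dim_vec (M *\<^sub>v v) = r" using M by simp
    have "(M *\<^sub>v v) \<bullet> (M *\<^sub>v v) = (\<Sum>i\<in>{0..<r}. (M *\<^sub>v v) $ i * (M *\<^sub>v v) $ i)"
      by (simp only: scalar_prod_def dimMv)
    also have "\<dots> = (\<Sum>i\<in>{0..<r}. (row M i \<bullet> v)\<^sup>2)"
      by (rule sum.cong) (use M in \<open>auto simp: power2_eq_square\<close>)
    also have "\<dots> \<le> (\<Sum>i\<in>{0..<r}. (vnorm (row M i))\<^sup>2)"
    proof (rule sum_mono)
      fix i assume i: "i \<in> {0..<r}"
      have "\<bar>row M i \<bullet> v\<bar> \<le> vnorm (row M i) * vnorm v" using M v i by (intro CS_abs) auto
      also have "\<dots> \<le> vnorm (row M i)" by (rule mult_left_le[OF v(2) vnorm_ge0])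
      finally have "\<bar>row M i \<bullet> v\<bar> \<le> vnorm (row M i)" .
      from power_mono[OF this abs_ge_zero, of 2]
      show "(row M i \<bullet> v)\<^sup>2 \<le> (vnorm (row M i))\<^sup>2" by simp
    qed
    finally show ?thesis unfolding K_def vnorm_def using real_sqrt_le_mono by blast
  qed
  show ?thesis
  proof (rule bdd_aboveI[of _ K])
    fix x assume "x \<in> {vnorm (M *\<^sub>v v) | v. v \<in> carrier_vec (dim_col M) \<and> vnorm v \<le> 1}"
    then obtain v where "x = vnorm (M *\<^sub>v v)" "v \<in> carrier_vec c" "vnorm v \<le> 1" using M by auto
    thus "x \<le> K" using key by simp
  qed
qed

lemma opnorm_bound: assumes M: "M \<in> carrier_mat r c" and v: "v \<in> carrier_vec c"
  shows "vnorm (M *\<^sub>v v) \<le> opnorm M * vnorm v"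
proof -
  let ?S = "{vnorm (M *\<^sub>v v) | v. v \<in> carrier_vec (dim_col M) \<and> vnorm v \<le> 1}"
  have bdd: "bdd_above ?S" by (rule opnorm_bdd[OF M])
  have M0: "M *\<^sub>v 0\<^sub>v c = 0\<^sub>v r" using M by (intro eq_vecI) auto
  have "0 \<in> ?S" using M M0 by (auto intro!: exI[of _ "0\<^sub>v c"])
  hence op0: "opnorm M \<ge> 0" unfolding opnorm_def using bdd by (meson cSup_upper)
  show ?thesis
  proof (cases "vnorm v = 0")
    case True
    hence "v = 0\<^sub>v c" using sp_eq0[of v] v unfolding vnorm_def by auto
    thus ?thesis using M op0 M0 by simp
  next
    case False
    hence pos: "vnorm v > 0" using vnorm_ge0[of v] by simp
    let ?w = "(1 / vnorm v) \<cdot>\<^sub>v v"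
    have "vnorm ?w = 1" using pos by (simp add: vnorm_smult)
    hence "vnorm (M *\<^sub>v ?w) \<in> ?S" using M v by auto
    hence "vnorm (M *\<^sub>v ?w) \<le> opnorm M" unfolding opnorm_def using bdd by (meson cSup_upper)
    moreover have "vnorm (M *\<^sub>v ?w) = vnorm (M *\<^sub>v v) / vnorm v"
      unfolding mult_mat_vec[OF M v] vnorm_smult using pos by simp
    ultimately have "vnorm (M *\<^sub>v v) / vnorm v \<le> opnorm M" by simp
    thus ?thesis using pos by (simp add: pos_divide_le_eq)
  qed
qed


lemma vsum_carrier: "(\<And>i. i \<in> I \<Longrightarrow> g i \<in> carrier_vec d) \<Longrightarrow> vsum d g I \<in> carrier_vec d"
  unfolding vsum_def by (rule finsum_vec_closed) auto

lemma vsum_index: "finite I \<Longrightarrow> (\<And>i. i \<in> I \<Longrightarrow> g i \<in> carrier_vec d) \<Longrightarrow> j < d \<Longrightarrow>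
   vsum d g I $ j = (\<Sum>i\<in>I. g i $ j)"
  unfolding vsum_def by (rule index_finsum_vec) auto

lemma vsum_insert: "finite I \<Longrightarrow> i \<notin> I \<Longrightarrow> (\<And>j. j \<in> insert i I \<Longrightarrow> g j \<in> carrier_vec d) \<Longrightarrow>
   vsum d g (insert i I) = g i + vsum d g I"
  unfolding vsum_def by (rule finsum_vec_insert) auto

lemma vsum_empty: "vsum d g {} = 0\<^sub>v d"
  unfolding vsum_def by (rule finsum_vec_empty)

lemma vsum_cong: assumes "finite I" "\<And>i. i \<in> I \<Longrightarrow> g i \<in> carrier_vec d" "\<And>i. i \<in> I \<Longrightarrow> f i = g i"
  shows "vsum d f I = vsum d g I"
proof -
  have f: "\<And>i. i \<in> I \<Longrightarrow> f i \<in> carrier_vec d" using assms by auto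
  show ?thesis
  proof (rule eq_vecI)
    have c1: "vsum d g I \<in> carrier_vec d" by (rule vsum_carrier) (rule assms(2))
    have c2: "vsum d f I \<in> carrier_vec d" by (rule vsum_carrier) (rule f)
    show "dim_vec (vsum d f I) = dim_vec (vsum d g I)" using c1 c2 by simp
    fix j assume "j < dim_vec (vsum d g I)"
    hence j: "j < d" using c1 by simp
    show "vsum d f I $ j = vsum d g I $ j"
      using vsum_index[OF assms(1) f j] vsum_index[OF assms(1) assms(2) j] assms(3) by simp
  qed
qed

lemma vsum_mult: assumes M: "M \<in> carrier_mat r d" and I: "finite I" and g: "\<And>i. i \<in> I \<Longrightarrow> g i \<in> carrier_vec d"
  shows "M *\<^sub>v vsum d g I = vsum r (\<lambda>i. M *\<^sub>v g i) I"
proof (rule eq_vecI)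
  have Mg: "\<And>i. i \<in> I \<Longrightarrow> M *\<^sub>v g i \<in> carrier_vec r" using M g by auto
  have c1: "vsum r (\<lambda>i. M *\<^sub>v g i) I \<in> carrier_vec r" by (rule vsum_carrier) (rule Mg)
  have c2: "vsum d g I \<in> carrier_vec d" by (rule vsum_carrier) (rule g)
  show "dim_vec (M *\<^sub>v vsum d g I) = dim_vec (vsum r (\<lambda>i. M *\<^sub>v g i) I)"
    using M c1 by simp
  fix j assume "j < dim_vec (vsum r (\<lambda>i. M *\<^sub>v g i) I)"
  hence j: "j < r" using c1 by simp
  have "(M *\<^sub>v vsum d g I) $ j = (\<Sum>k\<in>{0..<d}. M $$ (j,k) * vsum d g I $ k)"
    using M j c2 by (simp add: scalar_prod_def)
  also have "\<dots> = (\<Sum>k\<in>{0..<d}. (\<Sum>i\<in>I. M $$ (j,k) * g i $ k))"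
    by (rule sum.cong) (use I g in \<open>auto simp: vsum_index sum_distrib_left\<close>)
  also have "\<dots> = (\<Sum>i\<in>I. (\<Sum>k\<in>{0..<d}. M $$ (j,k) * g i $ k))" by (rule sum.swap)
  also have "\<dots> = (\<Sum>i\<in>I. (M *\<^sub>v g i) $ j)"
  proof (rule sum.cong[OF refl])
    fix i assume i: "i \<in> I"
    have gi: "dim_vec (g i) = d" using g[OF i] by simp
    show "(\<Sum>k\<in>{0..<d}. M $$ (j,k) * g i $ k) = (M *\<^sub>v g i) $ j"
      using M j gi by (auto simp: scalar_prod_def intro!: sum.cong)
  qed
  also have "\<dots> = vsum r (\<lambda>i. M *\<^sub>v g i) I $ j" using vsum_index[OF I Mg j] by simp
  finally show "(M *\<^sub>v vsum d g I) $ j = vsum r (\<lambda>i. M *\<^sub>v g i) I $ j" .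
qed

lemma vsum_smult: assumes I: "finite I" and g: "\<And>i. i \<in> I \<Longrightarrow> g i \<in> carrier_vec d"
  shows "c \<cdot>\<^sub>v vsum d g I = vsum d (\<lambda>i. c \<cdot>\<^sub>v g i) I"
proof -
  have g2: "\<And>i. i \<in> I \<Longrightarrow> c \<cdot>\<^sub>v g i \<in> carrier_vec d" using g by auto
  have c1: "vsum d g I \<in> carrier_vec d" by (rule vsum_carrier) (rule g)
  have c2: "vsum d (\<lambda>i. c \<cdot>\<^sub>v g i) I \<in> carrier_vec d" by (rule vsum_carrier) (rule g2)
  show ?thesis
  proof (rule eq_vecI)
    show "dim_vec (c \<cdot>\<^sub>v vsum d g I) = dim_vec (vsum d (\<lambda>i. c \<cdot>\<^sub>v g i) I)" using c1 c2 by simp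
    fix j assume "j < dim_vec (vsum d (\<lambda>i. c \<cdot>\<^sub>v g i) I)"
    hence j: "j < d" using c2 by simp
    have "(\<Sum>i\<in>I. (c \<cdot>\<^sub>v g i) $ j) = (\<Sum>i\<in>I. c * g i $ j)"
    proof (rule sum.cong[OF refl])
      fix x assume "x \<in> I" hence "dim_vec (g x) = d" using g by auto
      thus "(c \<cdot>\<^sub>v g x) $ j = c * g x $ j" using j by simp
    qed
    thus "(c \<cdot>\<^sub>v vsum d g I) $ j = vsum d (\<lambda>i. c \<cdot>\<^sub>v g i) I $ j"
      using vsum_index[OF I g j] vsum_index[OF I g2 j] j c1 by (simp add: sum_distrib_left)
  qed
qed

lemma vsum_diff: assumes I: "finite I" and g: "\<And>i. i \<in> I \<Longrightarrow> g i \<in> carrier_vec d"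
   and f: "\<And>i. i \<in> I \<Longrightarrow> f i \<in> carrier_vec d"
  shows "vsum d f I - vsum d g I = vsum d (\<lambda>i. f i - g i) I"
proof -
  have g2: "\<And>i. i \<in> I \<Longrightarrow> f i - g i \<in> carrier_vec d" using g f by auto
  have c1: "vsum d g I \<in> carrier_vec d" by (rule vsum_carrier) (rule g)
  have c2: "vsum d f I \<in> carrier_vec d" by (rule vsum_carrier) (rule f)
  have c3: "vsum d (\<lambda>i. f i - g i) I \<in> carrier_vec d" by (rule vsum_carrier) (rule g2)
  show ?thesis
  proof (rule eq_vecI)
    show "dim_vec (vsum d f I - vsum d g I) = dim_vec (vsum d (\<lambda>i. f i - g i) I)" using c1 c2 c3 by simp
    fix j assume "j < dim_vec (vsum d (\<lambda>i. f i - g i) I)"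
    hence j: "j < d" using c3 by simp
    have "(\<Sum>i\<in>I. (f i - g i) $ j) = (\<Sum>i\<in>I. f i $ j - g i $ j)"
    proof (rule sum.cong[OF refl])
      fix x assume "x \<in> I" hence "dim_vec (g x) = d" using g by auto
      thus "(f x - g x) $ j = f x $ j - g x $ j" using j by simp
    qed
    thus "(vsum d f I - vsum d g I) $ j = vsum d (\<lambda>i. f i - g i) I $ j"
      using vsum_index[OF I g j] vsum_index[OF I f j] vsum_index[OF I g2 j] j c1 by (simp add: sum_subtractf)
  qed
qed

lemma vnorm_vsum: assumes I: "finite I" and g: "\<And>i. i \<in> I \<Longrightarrow> g i \<in> carrier_vec d"
  shows "vnorm (vsum d g I) \<le> (\<Sum>i\<in>I. vnorm (g i))"
  using I g
proof (induction I rule: finite_induct)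
  case empty thus ?case by (simp add: vsum_empty)
next
  case (insert i I)
  have "vnorm (vsum d g (insert i I)) = vnorm (g i + vsum d g I)"
    by (subst vsum_insert) (use insert in auto)
  also have "\<dots> \<le> vnorm (g i) + vnorm (vsum d g I)"
    by (rule vnorm_add[of _ d]) (use insert in \<open>auto intro!: vsum_carrier\<close>)
  also have "\<dots> \<le> vnorm (g i) + (\<Sum>i\<in>I. vnorm (g i))" using insert by auto
  finally show ?case using insert by simp
qed


definition cconv :: "(nat \<Rightarrow> real vec) \<Rightarrow> real vec \<Rightarrow> nat \<Rightarrow> bool" where
  "cconv X l d \<longleftrightarrow> (\<forall>j. X j \<in> carrier_vec d) \<and> l \<in> carrier_vec d \<and> (\<forall>i<d. (\<lambda>j. X j $ i) \<longlonglongrightarrow> l $ i)"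

lemma BW_vec: fixes X :: "nat \<Rightarrow> real vec" assumes X: "\<And>j. X j \<in> carrier_vec d" and b: "\<And>j i. i < d \<Longrightarrow> \<bar>X j $ i\<bar> \<le> 1"
  shows "\<exists>r l. strict_mono r \<and> cconv (X \<circ> r) l d"
proof -
  have "k \<le> d \<Longrightarrow> \<exists>r. strict_mono r \<and> (\<forall>i<k. convergent (\<lambda>j. X (r j) $ i))" for k
  proof (induction k)
    case 0
    have "strict_mono (\<lambda>j::nat. j)" by (simp add: strict_mono_def)
    thus ?case by (intro exI[of _ "\<lambda>j::nat. j"]) simp
  next
    case (Suc k)
    hence kd: "k < d" by simp
    from Suc obtain r where r: "strict_mono r" "\<forall>i<k. convergent (\<lambda>j. X (r j) $ i)" by (auto simp del: One_nat_def)
    have "bounded (range (\<lambda>j. X (r j) $ k))"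
      unfolding bounded_iff using b kd by (intro exI[of _ 1]) auto
    from bounded_imp_convergent_subsequence[OF this] obtain l' r' where
      r': "strict_mono r'" "((\<lambda>j. X (r j) $ k) \<circ> r') \<longlonglongrightarrow> l'" by blast
    show ?case
    proof (intro exI[of _ "r \<circ> r'"] conjI allI impI)
      show "strict_mono (r \<circ> r')" by (rule strict_mono_o[OF r(1) r'(1)])
      fix i assume i: "i < Suc k"
      show "convergent (\<lambda>j. X ((r \<circ> r') j) $ i)"
      proof (cases "i = k")
        case True thus ?thesis using r' unfolding convergent_def by (auto simp: o_def)
      next
        case False
        hence "convergent (\<lambda>j. X (r j) $ i)" using r i by auto
        then obtain L where "(\<lambda>j. X (r j) $ i) \<longlonglongrightarrow> L" unfolding convergent_def by blast
        from LIMSEQ_subseq_LIMSEQ[OF this r'(1)]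
        show ?thesis unfolding convergent_def by (auto simp: o_def)
      qed
    qed
  qed
  from this[OF order.refl] obtain r where r: "strict_mono r" "\<forall>i<d. convergent (\<lambda>j. X (r j) $ i)" by blast
  define l where "l = vec d (\<lambda>i. lim (\<lambda>j. X (r j) $ i))"
  have "cconv (X \<circ> r) l d" unfolding cconv_def l_def using X r(2)
    by (auto simp: convergent_LIMSEQ_iff)
  thus ?thesis using r(1) by blast
qed

lemma cconv_mult: assumes c: "cconv X l d" and M: "M \<in> carrier_mat r d"
  shows "cconv (\<lambda>j. M *\<^sub>v X j) (M *\<^sub>v l) r"
  unfolding cconv_def
proof (intro conjI allI impI)
  show "M *\<^sub>v X j \<in> carrier_vec r" for j using c M unfolding cconv_def by auto
  show "M *\<^sub>v l \<in> carrier_vec r" using c M unfolding cconv_def by auto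
  fix i assume i: "i < r"
  have dX: "dim_vec (X j) = d" for j using c unfolding cconv_def by auto
  have "(\<lambda>j. \<Sum>k\<in>{0..<d}. M $$ (i,k) * X j $ k) \<longlonglongrightarrow> (\<Sum>k\<in>{0..<d}. M $$ (i,k) * l $ k)"
    using c unfolding cconv_def by (intro tendsto_sum tendsto_mult tendsto_const) auto
  moreover have "(M *\<^sub>v X j) $ i = (\<Sum>k\<in>{0..<d}. M $$ (i,k) * X j $ k)" for j
    using M i by (auto simp: scalar_prod_def dX intro!: sum.cong)
  moreover have "(M *\<^sub>v l) $ i = (\<Sum>k\<in>{0..<d}. M $$ (i,k) * l $ k)"
    using c M i unfolding cconv_def by (auto simp: scalar_prod_def intro!: sum.cong)
  ultimately show "(\<lambda>j. (M *\<^sub>v X j) $ i) \<longlonglongrightarrow> (M *\<^sub>v l) $ i" by simp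
qed

lemma cconv_sp: assumes "cconv X l d" "cconv Y m d"
  shows "(\<lambda>j. X j \<bullet> Y j) \<longlonglongrightarrow> l \<bullet> m"
proof -
  have "(\<lambda>j. \<Sum>k\<in>{0..<d}. X j $ k * Y j $ k) \<longlonglongrightarrow> (\<Sum>k\<in>{0..<d}. l $ k * m $ k)"
    using assms unfolding cconv_def by (intro tendsto_sum tendsto_mult) auto
  moreover have "X j \<bullet> Y j = (\<Sum>k\<in>{0..<d}. X j $ k * Y j $ k)" for j
  proof -
    have "dim_vec (Y j) = d" using assms unfolding cconv_def by auto
    thus ?thesis unfolding scalar_prod_def by simp
  qed
  moreover have "l \<bullet> m = (\<Sum>k\<in>{0..<d}. l $ k * m $ k)"
    using assms unfolding cconv_def scalar_prod_def by auto
  ultimately show ?thesis by simp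
qed

lemma cconv_const: "z \<in> carrier_vec d \<Longrightarrow> cconv (\<lambda>j. z) z d"
  unfolding cconv_def by auto

lemma cconv_o: "cconv X l d \<Longrightarrow> cconv (\<lambda>j. X j) l d" by simp

lemma exists_min:
  fixes q :: "real vec \<Rightarrow> real"
  assumes K: "K \<subseteq> carrier_vec d" "K \<noteq> {}"
    and bnd: "\<And>u i. u \<in> K \<Longrightarrow> i < d \<Longrightarrow> \<bar>u $ i\<bar> \<le> 1"
    and cl: "\<And>X l. (\<And>j. X j \<in> K) \<Longrightarrow> cconv X l d \<Longrightarrow> l \<in> K"
    and cont: "\<And>X l. (\<And>j. X j \<in> K) \<Longrightarrow> cconv X l d \<Longrightarrow> (\<lambda>j. q (X j)) \<longlonglongrightarrow> q l"
    and pos: "\<And>u. u \<in> K \<Longrightarrow> q u \<ge> 0"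
  shows "\<exists>l\<in>K. \<forall>u\<in>K. q l \<le> q u"
proof -
  define \<mu> where "\<mu> = Inf (q ` K)"
  have bb: "bdd_below (q ` K)" using pos by (intro bdd_belowI[of _ 0]) auto
  have "\<exists>u\<in>K. q u < \<mu> + 1 / (real j + 1)" for j
  proof -
    have "Inf (q ` K) < \<mu> + 1 / (real j + 1)" unfolding \<mu>_def by simp
    from cInf_lessD[OF _ this] K(2) show ?thesis by auto
  qed
  then obtain X where X: "\<And>j. X j \<in> K" "\<And>j. q (X j) < \<mu> + 1 / (real j + 1)" by metis
  obtain r l where rl: "strict_mono r" "cconv (X \<circ> r) l d"
    using BW_vec[of X d] X K bnd by blast
  have Xr: "\<And>j. (X \<circ> r) j \<in> K" using X by simp
  have lK: "l \<in> K" by (rule cl[OF Xr rl(2)])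
  have lim1: "(\<lambda>j. q ((X \<circ> r) j)) \<longlonglongrightarrow> q l" by (rule cont[OF Xr rl(2)])
  have lim2: "(\<lambda>j. \<mu> + 1 / (real j + 1)) \<longlonglongrightarrow> \<mu> + 0"
    using LIMSEQ_Suc[OF lim_inverse_n'] by (intro tendsto_add tendsto_const) (simp add: add.commute)
  have "q ((X \<circ> r) j) \<le> \<mu> + 1 / (real j + 1)" for j
  proof -
    have "real j \<le> real (r j)" using strict_mono_imp_increasing[OF rl(1)] by simp
    hence "1 / (real (r j) + 1) \<le> 1 / (real j + 1)" by (simp add: frac_le)
    thus ?thesis using X(2)[of "r j"] by simp
  qed
  hence "q l \<le> \<mu> + 0" using LIMSEQ_le[OF lim1 lim2] by auto
  moreover have "\<forall>u\<in>K. \<mu> \<le> q u" unfolding \<mu>_def using bb by (auto intro: cInf_lower)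
  ultimately show ?thesis using lK by force
qed


lemma quad0: fixes a b :: real assumes "\<And>t. 0 \<le> a * t + b * t\<^sup>2" shows "a = 0"
proof -
  define c where "c = \<bar>b\<bar> + 1"
  have c: "c > 0" "b - c \<le> -1" unfolding c_def by auto
  have "0 \<le> a * (- a / c) + b * (- a / c)\<^sup>2" by (rule assms)
  hence "0 \<le> (a * (- a / c) + b * (- a / c)\<^sup>2) * c\<^sup>2" by simp
  also have "\<dots> = a\<^sup>2 * (b - c)" using c by (simp add: field_simps power2_eq_square)
  also have "\<dots> \<le> a\<^sup>2 * (-1)" using c by (intro mult_left_mono) auto
  finally show ?thesis by simp
qed

lemma sp_exp: assumes "u \<in> carrier_vec m" "h \<in> carrier_vec m"
  shows "(u + t \<cdot>\<^sub>v h) \<bullet> (u + t \<cdot>\<^sub>v h) = u \<bullet> u + 2 * t * (u \<bullet> h) + t\<^sup>2 * ((h::real vec) \<bullet> h)"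
  using assms unfolding scalar_prod_def
  by (simp add: sum.distrib sum_distrib_left power2_eq_square algebra_simps)

lemma transp_sp: assumes B: "B \<in> carrier_mat d n" and y: "y \<in> carrier_vec n" and z: "z \<in> carrier_vec d"
  shows "(B *\<^sub>v y) \<bullet> z = y \<bullet> (transpose_mat B *\<^sub>v (z::real vec))"
proof -
  have "(transpose_mat B *\<^sub>v z) \<bullet> y = z \<bullet> (B *\<^sub>v y)" by (rule transpose_vec_mult_scalar[OF B y z])
  moreover have "(transpose_mat B *\<^sub>v z) \<bullet> y = y \<bullet> (transpose_mat B *\<^sub>v z)"
    by (rule comm_scalar_prod[of _ n]) (use B z y in auto)
  moreover have "z \<bullet> (B *\<^sub>v y) = (B *\<^sub>v y) \<bullet> z"
    by (rule comm_scalar_prod[of _ d]) (use B z y in auto)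
  ultimately show ?thesis by simp
qed

lemma finite_pos_eig: assumes "C \<in> carrier_mat n n"
  shows "finite {e::real. eigenvalue C e \<and> e > 0}"
proof -
  have "char_poly C \<noteq> 0" using degree_monic_char_poly[OF assms] by auto
  hence "finite {x. poly (char_poly C) x = 0}" by (rule poly_roots_finite)
  moreover have "{e::real. eigenvalue C e \<and> e > 0} \<subseteq> {x. poly (char_poly C) x = 0}"
    using eigenvalue_root_char_poly[OF assms] by auto
  ultimately show ?thesis by (rule finite_subset[rotated])
qed

lemma sigma_bound:
  assumes B: "B \<in> carrier_mat d n" and y: "y \<in> carrier_vec n" and v: "v = B *\<^sub>v y"
  shows "sigma_plus B * (v \<bullet> v) \<le> (transpose_mat B *\<^sub>v v) \<bullet> (transpose_mat B *\<^sub>v v) \<and>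
         (v \<bullet> v > 0 \<longrightarrow> sigma_plus B > 0)"
proof -
  define Bt where "Bt = transpose_mat B"
  have Bt: "Bt \<in> carrier_mat n d" using B unfolding Bt_def by auto
  define q where "q u = (Bt *\<^sub>v u) \<bullet> (Bt *\<^sub>v u)" for u
  define perp where "perp u \<longleftrightarrow> (\<forall>z\<in>carrier_vec d. Bt *\<^sub>v z = 0\<^sub>v n \<longrightarrow> u \<bullet> z = 0)" for u
  have vc: "v \<in> carrier_vec d" using B y v by auto
  have perpv: "perp v" unfolding perp_def
  proof (intro ballI impI)
    fix z assume z: "z \<in> carrier_vec d" "Bt *\<^sub>v z = 0\<^sub>v n"
    have "v \<bullet> z = y \<bullet> (Bt *\<^sub>v z)" unfolding v Bt_def by (rule transp_sp[OF B y z(1)])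
    thus "v \<bullet> z = 0" using z y by simp
  qed
  show ?thesis
  proof (cases "v \<bullet> v = 0")
    case True thus ?thesis using sp_self_ge0 by (simp add: Bt_def[symmetric])
  next
    case False
    hence vpos: "v \<bullet> v > 0" using sp_self_ge0[of v] by simp
    define K where "K = {u \<in> carrier_vec d. u \<bullet> u = 1 \<and> perp u}"
    have smult_sp: "(c \<cdot>\<^sub>v w) \<bullet> (c \<cdot>\<^sub>v w) = c\<^sup>2 * (w \<bullet> w)" if "w \<in> carrier_vec d" for c :: real and w
      using vnorm_smult[of c w] vnorm_sq[of "c \<cdot>\<^sub>v w"] vnorm_sq[of w] by (simp add: power_mult_distrib power2_eq_square)
    have q_smult: "q (c \<cdot>\<^sub>v w) = c\<^sup>2 * q w" if "w \<in> carrier_vec d" for c :: real and w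
      unfolding q_def using that Bt by (simp add: mult_mat_vec power2_eq_square)
    have perp_smult: "perp (c \<cdot>\<^sub>v w)" if "w \<in> carrier_vec d" "perp w" for c :: real and w
      using that unfolding perp_def by simp
    have norm_in: "(1 / sqrt (w \<bullet> w)) \<cdot>\<^sub>v w \<in> K" if "w \<in> carrier_vec d" "perp w" "w \<bullet> w > 0" for w
    proof -
      have "((1 / sqrt (w \<bullet> w)) \<cdot>\<^sub>v w) \<bullet> ((1 / sqrt (w \<bullet> w)) \<cdot>\<^sub>v w) = 1"
        using that by (simp add: smult_sp power_divide)
      thus ?thesis unfolding K_def using that perp_smult by auto
    qed
    have Kne: "K \<noteq> {}" using norm_in[OF vc perpv vpos] by auto
    have KC: "K \<subseteq> carrier_vec d" unfolding K_def by auto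
    have bnd: "\<bar>u $ i\<bar> \<le> 1" if "u \<in> K" "i < d" for u i
    proof -
      have "u $ i * u $ i \<le> (\<Sum>k\<in>{0..<d}. u $ k * u $ k)"
        by (rule member_le_sum) (use that in auto)
      also have "\<dots> = 1" using that unfolding K_def scalar_prod_def by auto
      finally have "(u $ i)\<^sup>2 \<le> 1" by (simp add: power2_eq_square)
      thus ?thesis by (simp add: abs_square_le_1)
    qed
    have cl: "l \<in> K" if X: "\<And>j. X j \<in> K" and c: "cconv X l d" for X l
    proof -
      have lc: "l \<in> carrier_vec d" using c unfolding cconv_def by auto
      have lim: "(\<lambda>j. X j \<bullet> X j) \<longlonglongrightarrow> l \<bullet> l" by (rule cconv_sp[OF c c])
      have "(\<lambda>j. X j \<bullet> X j) = (\<lambda>j. 1)" using X unfolding K_def by auto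
      with lim have l1: "l \<bullet> l = 1" using LIMSEQ_unique[OF _ tendsto_const] by metis
      have "perp l" unfolding perp_def
      proof (intro ballI impI)
        fix z assume z: "z \<in> carrier_vec d" "Bt *\<^sub>v z = 0\<^sub>v n"
        have lim: "(\<lambda>j. X j \<bullet> z) \<longlonglongrightarrow> l \<bullet> z" by (rule cconv_sp[OF c cconv_const[OF z(1)]])
        have "(\<lambda>j. X j \<bullet> z) = (\<lambda>j. 0)" using X z unfolding K_def perp_def by auto
        with lim show "l \<bullet> z = 0" using LIMSEQ_unique[OF _ tendsto_const] by metis
      qed
      thus ?thesis using lc l1 unfolding K_def by auto
    qed
    have cont: "(\<lambda>j. q (X j)) \<longlonglongrightarrow> q l" if "\<And>j. X j \<in> K" and c: "cconv X l d" for X l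
      unfolding q_def using cconv_sp[OF cconv_mult[OF c Bt] cconv_mult[OF c Bt]] .
    have pos: "q u \<ge> 0" for u unfolding q_def by (rule sp_self_ge0)
    have "\<exists>l\<in>K. \<forall>u\<in>K. q l \<le> q u"
    proof (rule exists_min[where K=K and d=d and q=q])
      show "K \<subseteq> carrier_vec d" by (rule KC)
      show "K \<noteq> {}" by (rule Kne)
      show "\<And>u i. u \<in> K \<Longrightarrow> i < d \<Longrightarrow> \<bar>u $ i\<bar> \<le> 1" by (rule bnd)
      show "\<And>X l. (\<And>j. X j \<in> K) \<Longrightarrow> cconv X l d \<Longrightarrow> l \<in> K" by (rule cl)
      show "\<And>X l. (\<And>j. X j \<in> K) \<Longrightarrow> cconv X l d \<Longrightarrow> (\<lambda>j. q (X j)) \<longlonglongrightarrow> q l" by (rule cont)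
      show "\<And>u. u \<in> K \<Longrightarrow> 0 \<le> q u" by (rule pos)
    qed
    then obtain l where lK: "l \<in> K" and lmin: "\<forall>u\<in>K. q l \<le> q u" by blast
    have lc: "l \<in> carrier_vec d" and l1: "l \<bullet> l = 1" and perpl: "perp l" using lK unfolding K_def by auto
    define \<mu> where "\<mu> = q l"
    have hom: "\<mu> * (w \<bullet> w) \<le> q w" if w: "w \<in> carrier_vec d" "perp w" for w
    proof (cases "w \<bullet> w = 0")
      case True thus ?thesis using pos[of w] by simp
    next
      case False
      hence wpos: "w \<bullet> w > 0" using sp_self_ge0[of w] by simp
      have "\<mu> \<le> q ((1 / sqrt (w \<bullet> w)) \<cdot>\<^sub>v w)" unfolding \<mu>_def using lmin norm_in[OF w wpos] by auto
      also have "\<dots> = q w / (w \<bullet> w)" using w wpos by (simp add: q_smult power_divide)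
      finally show ?thesis using wpos by (simp add: pos_le_divide_eq mult.commute)
    qed
    have lag: "(Bt *\<^sub>v l) \<bullet> (Bt *\<^sub>v h) = \<mu> * (l \<bullet> h)" if h: "h \<in> carrier_vec d" "perp h" for h
    proof -
      define a where "a = (Bt *\<^sub>v l) \<bullet> (Bt *\<^sub>v h)"
      have "0 \<le> (2 * a - 2 * \<mu> * (l \<bullet> h)) * t + (q h - \<mu> * (h \<bullet> h)) * t\<^sup>2" for t
      proof -
        have wc: "l + t \<cdot>\<^sub>v h \<in> carrier_vec d" using lc h by auto
        have pw: "perp (l + t \<cdot>\<^sub>v h)" using perpl h lc unfolding perp_def
          by (auto simp: add_scalar_prod_distrib)
        have e1: "Bt *\<^sub>v (l + t \<cdot>\<^sub>v h) = Bt *\<^sub>v l + t \<cdot>\<^sub>v (Bt *\<^sub>v h)"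
          using Bt lc h by (simp add: mult_add_distrib_mat_vec mult_mat_vec)
        have "q (l + t \<cdot>\<^sub>v h) = q l + 2 * t * a + t\<^sup>2 * q h"
          unfolding q_def e1 a_def by (rule sp_exp[of _ n]) (use Bt lc h in auto)
        moreover have "(l + t \<cdot>\<^sub>v h) \<bullet> (l + t \<cdot>\<^sub>v h) = 1 + 2 * t * (l \<bullet> h) + t\<^sup>2 * (h \<bullet> h)"
          using sp_exp[OF lc h(1)] l1 by simp
        moreover have "\<mu> * ((l + t \<cdot>\<^sub>v h) \<bullet> (l + t \<cdot>\<^sub>v h)) \<le> q (l + t \<cdot>\<^sub>v h)" by (rule hom[OF wc pw])
        ultimately show ?thesis unfolding \<mu>_def by (simp add: algebra_simps)
      qed
      hence "2 * a - 2 * \<mu> * (l \<bullet> h) = 0" by (rule quad0)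
      thus ?thesis unfolding a_def by simp
    qed
    define g where "g = B *\<^sub>v (Bt *\<^sub>v l)"
    have gc: "g \<in> carrier_vec d" using B Bt lc unfolding g_def by auto
    define h where "h = g - \<mu> \<cdot>\<^sub>v l"
    have hc: "h \<in> carrier_vec d" using gc lc unfolding h_def by auto
    have g_sp: "g \<bullet> z = (Bt *\<^sub>v l) \<bullet> (Bt *\<^sub>v z)" if "z \<in> carrier_vec d" for z
      unfolding g_def Bt_def by (rule transp_sp[OF B _ that]) (use Bt lc in \<open>auto simp: Bt_def\<close>)
    have perph: "perp h" unfolding perp_def
    proof (intro ballI impI)
      fix z assume z: "z \<in> carrier_vec d" "Bt *\<^sub>v z = 0\<^sub>v n"
      have "h \<bullet> z = g \<bullet> z - \<mu> * (l \<bullet> z)" unfolding h_def using gc lc z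
        by (simp add: minus_scalar_prod_distrib)
      also have "g \<bullet> z = 0" using g_sp[OF z(1)] z Bt lc by simp
      also have "l \<bullet> z = 0" using perpl z unfolding perp_def by auto
      finally show "h \<bullet> z = 0" by simp
    qed
    have "h \<bullet> h = (g - \<mu> \<cdot>\<^sub>v l) \<bullet> h" using h_def by (rule arg_cong[where f="\<lambda>x. x \<bullet> h"])
    also have "\<dots> = g \<bullet> h - \<mu> * (l \<bullet> h)" using gc lc hc by (simp add: minus_scalar_prod_distrib)
    also have "g \<bullet> h = \<mu> * (l \<bullet> h)" using g_sp[OF hc] lag[OF hc perph] by simp
    finally have "h \<bullet> h = 0" by simp
    hence h0: "h = 0\<^sub>v d" using sp_eq0[of h] hc by auto
    have geq: "g = \<mu> \<cdot>\<^sub>v l"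
    proof (rule eq_vecI)
      fix i assume "i < dim_vec (\<mu> \<cdot>\<^sub>v l)" hence i: "i < d" using lc by simp
      have "h $ i = 0" using h0 i by simp
      thus "g $ i = (\<mu> \<cdot>\<^sub>v l) $ i" unfolding h_def using gc lc i by simp
    qed (use gc lc in simp)
    define e where "e = Bt *\<^sub>v l"
    have ec: "e \<in> carrier_vec n" using Bt lc unfolding e_def by auto
    have e0: "e \<noteq> 0\<^sub>v n"
    proof
      assume "e = 0\<^sub>v n"
      hence "l \<bullet> l = 0" using perpl lc unfolding perp_def e_def by auto
      thus False using l1 by simp
    qed
    have mupos: "\<mu> > 0"
    proof -
      have "\<mu> \<ge> 0" unfolding \<mu>_def by (rule pos)
      moreover have "\<mu> \<noteq> 0"
      proof
        assume "\<mu> = 0"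
        hence "e \<bullet> e = 0" unfolding \<mu>_def q_def e_def by simp
        thus False using sp_eq0[of e] ec e0 by auto
      qed
      ultimately show ?thesis by simp
    qed
    have "(Bt * B) *\<^sub>v e = \<mu> \<cdot>\<^sub>v e"
    proof -
      have "(Bt * B) *\<^sub>v e = Bt *\<^sub>v (B *\<^sub>v e)" using Bt B ec by (rule assoc_mult_mat_vec)
      also have "B *\<^sub>v e = \<mu> \<cdot>\<^sub>v l" using geq unfolding g_def e_def .
      also have "Bt *\<^sub>v (\<mu> \<cdot>\<^sub>v l) = \<mu> \<cdot>\<^sub>v e" unfolding e_def using Bt lc by (rule mult_mat_vec)
      finally show ?thesis .
    qed
    hence eig: "eigenvalue (Bt * B) \<mu>" unfolding eigenvalue_def eigenvector_def using ec e0 Bt B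
      by (intro exI[of _ e]) auto
    have BtB: "Bt * B \<in> carrier_mat n n" using Bt B by auto
    have "sigma_plus B \<le> \<mu>" unfolding sigma_plus_def Bt_def[symmetric]
      by (rule Min_le) (use finite_pos_eig[OF BtB] eig mupos in auto)
    moreover have "sigma_plus B > 0" unfolding sigma_plus_def Bt_def[symmetric]
      using finite_pos_eig[OF BtB] eig mupos by (subst Min_gr_iff) auto
    ultimately have sig: "sigma_plus B \<le> \<mu>" "sigma_plus B > 0" by auto
    from sig(1) have "sigma_plus B * (v \<bullet> v) \<le> \<mu> * (v \<bullet> v)" using vpos by (simp add: mult_right_mono)
    also have "\<dots> \<le> q v" by (rule hom[OF vc perpv])
    finally show ?thesis unfolding q_def Bt_def using sig(2) by simp
  qed
qed


lemma vec_minus_smult: "a \<in> carrier_vec n \<Longrightarrow> b \<in> carrier_vec n \<Longrightarrow> a - c \<cdot>\<^sub>v b = a + (- c) \<cdot>\<^sub>v (b :: real vec)"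
  by (intro eq_vecI) auto

lemma real_first_ineq:
  fixes \<beta> \<theta> \<sigma> s V X Y U :: real
  assumes pos: "\<beta> > 0" "\<theta> > 0" "\<sigma> > 0" "0 \<le> s" "s < 1"
    and h1: "\<sigma> * V \<le> X" and h2: "\<theta>\<^sup>2 * U \<ge> (1 - s) * (X - s * Y)"
  shows "1 / (\<beta> * \<theta>) * V + (2 * s / (\<beta> * \<theta> * (1 - s) * \<sigma>)) / 2 * (X - Y)
         \<le> \<theta> / (1 - s)\<^sup>2 / (\<beta> * \<sigma>) * U"
proof -
  define r where "r = 1 - s"
  have r: "r > 0" "1 - s = r" unfolding r_def using pos by auto
  define D where "D = \<beta> * \<theta> * \<sigma> * (1 - s)"
  have D: "D > 0" unfolding D_def using pos by simp
  have e1: "(1 / (\<beta> * \<theta>) * V + (2 * s / (\<beta> * \<theta> * (1 - s) * \<sigma>)) / 2 * (X - Y)) * D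
       = (1 - s) * (\<sigma> * V) + s * (X - Y)" unfolding D_def using pos by (simp add: field_simps)
  have e2: "(\<theta> / (1 - s)\<^sup>2 / (\<beta> * \<sigma>) * U) * D = \<theta>\<^sup>2 * U / (1 - s)"
    unfolding D_def r(2) using pos r(1) by (simp add: field_simps power2_eq_square)
  have "(1 - s) * (\<sigma> * V) + s * (X - Y) \<le> (1 - s) * X + s * (X - Y)"
    using h1 pos by (intro add_right_mono mult_left_mono) auto
  also have "\<dots> = X - s * Y" by (simp add: algebra_simps)
  also have "\<dots> \<le> \<theta>\<^sup>2 * U / (1 - s)" using h2 r by (simp add: pos_le_divide_eq mult.commute)
  finally have "(1 / (\<beta> * \<theta>) * V + (2 * s / (\<beta> * \<theta> * (1 - s) * \<sigma>)) / 2 * (X - Y)) * D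
      \<le> (\<theta> / (1 - s)\<^sup>2 / (\<beta> * \<sigma>) * U) * D" using e1 e2 by simp
  from this D show ?thesis by (rule mult_right_le_imp_le)
qed

lemma vec_first_ineq:
  fixes a b u v :: "real vec"
  assumes pos: "\<beta> > 0" "\<theta> > 0" "\<theta> < 2" "\<sigma> > 0"
    and ab: "a \<in> carrier_vec n" "b \<in> carrier_vec n" "u \<in> carrier_vec n"
    and h1: "\<sigma> * (v \<bullet> v) \<le> a \<bullet> a"
    and hu: "\<theta> \<cdot>\<^sub>v u = a - (1 - \<theta>) \<cdot>\<^sub>v b"
  shows "1 / (\<beta> * \<theta>) * (vnorm v)\<^sup>2
      + 2 * \<bar>\<theta> - 1\<bar> / (\<beta> * \<theta> * (1 - \<bar>\<theta> - 1\<bar>) * \<sigma>) / 2 * ((vnorm a)\<^sup>2 - (vnorm b)\<^sup>2)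
      \<le> gamma_theta \<theta> / (\<beta> * \<sigma>) * (vnorm u)\<^sup>2"
proof -
  define s where "s = \<bar>\<theta> - 1\<bar>"
  define t where "t = 1 - \<theta>"
  have s: "0 \<le> s" "s < 1" "t\<^sup>2 = s\<^sup>2" unfolding s_def t_def using pos by (auto simp: power2_commute)
  have "(\<theta> \<cdot>\<^sub>v u) \<bullet> (\<theta> \<cdot>\<^sub>v u) = \<theta>\<^sup>2 * (u \<bullet> u)"
    using vnorm_smult[of \<theta> u] vnorm_sq[of "\<theta> \<cdot>\<^sub>v u"] vnorm_sq[of u] by (simp add: power_mult_distrib power2_eq_square)
  moreover have "\<theta> \<cdot>\<^sub>v u = a + (- t) \<cdot>\<^sub>v b" using hu vec_minus_smult[OF ab(1,2)] unfolding t_def by simp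
  moreover have "(a + (- t) \<cdot>\<^sub>v b) \<bullet> (a + (- t) \<cdot>\<^sub>v b) = a \<bullet> a + 2 * (- t) * (a \<bullet> b) + (- t)\<^sup>2 * (b \<bullet> b)"
    by (rule sp_exp[OF ab(1,2)])
  ultimately have eqU: "\<theta>\<^sup>2 * (u \<bullet> u) = a \<bullet> a - 2 * t * (a \<bullet> b) + s\<^sup>2 * (b \<bullet> b)"
    using s(3) by simp
  have cs: "\<bar>a \<bullet> b\<bar> \<le> vnorm a * vnorm b" using ab by (intro CS_abs) auto
  have "t * (a \<bullet> b) \<le> s * (vnorm a * vnorm b)"
  proof -
    have "t * (a \<bullet> b) \<le> \<bar>t\<bar> * \<bar>a \<bullet> b\<bar>" by (simp add: abs_mult[symmetric])
    also have "\<bar>t\<bar> = s" unfolding s_def t_def by simp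
    finally show ?thesis using cs s by (meson mult_left_mono order_trans)
  qed
  moreover have "0 \<le> s * (vnorm a - vnorm b)\<^sup>2" using s by simp
  ultimately have "\<theta>\<^sup>2 * (u \<bullet> u) \<ge> (1 - s) * (a \<bullet> a - s * (b \<bullet> b))"
    unfolding eqU using vnorm_sq[of a] vnorm_sq[of b]
    by (simp add: power2_diff algebra_simps power2_eq_square)
  from real_first_ineq[OF pos(1,2,4) s(1,2) h1 this]
  show ?thesis unfolding gamma_theta_def s_def[symmetric] using vnorm_sq[of u] vnorm_sq[of v] vnorm_sq[of a] vnorm_sq[of b]
    by simp
qed

lemma sq_bound:
  fixes C :: "nat \<Rightarrow> real" and E1 E2 :: real and p :: nat
  assumes p: "p \<ge> 2"
  shows "((\<Sum>j\<in>{1..p-1}. C j) + E1 + E2)\<^sup>2 \<le> (real p + 1) * ((\<Sum>j\<in>{1..p-1}. (C j)\<^sup>2) + E1\<^sup>2 + E2\<^sup>2)"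
proof -
  define f where "f j = (if j = p then E1 else if j = p + 1 then E2 else C j)" for j
  have set: "{1..p+1} = insert (p+1) (insert p {1..p-1})" using p by auto
  have c1: "(\<Sum>j\<in>{1..p-1}. f j) = (\<Sum>j\<in>{1..p-1}. C j)" by (rule sum.cong) (auto simp: f_def)
  have c2: "(\<Sum>j\<in>{1..p-1}. (f j)\<^sup>2) = (\<Sum>j\<in>{1..p-1}. (C j)\<^sup>2)" by (rule sum.cong) (auto simp: f_def)
  have s1: "(\<Sum>j\<in>{1..p+1}. f j * 1) = (\<Sum>j\<in>{1..p-1}. C j) + E1 + E2"
    unfolding set using p c1 by (simp add: f_def)
  have s2: "(\<Sum>j\<in>{1..p+1}. (f j)\<^sup>2) = (\<Sum>j\<in>{1..p-1}. (C j)\<^sup>2) + E1\<^sup>2 + E2\<^sup>2"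
    unfolding set using p c2 by (simp add: f_def)
  have s3: "(\<Sum>j\<in>{1..p+1}. (1::real)\<^sup>2) = real p + 1" by simp
  from Cauchy_Schwarz_ineq_sum[of f "\<lambda>_. 1" "{1..p+1}"]
  show ?thesis unfolding s1 s2 s3 by (simp add: mult.commute)
qed


lemma opt_grad:
  fixes \<phi> :: "real vec \<Rightarrow> real"
  assumes x: "x \<in> carrier_vec N" and G: "G \<in> carrier_vec N"
    and min: "\<And>y. y \<in> carrier_vec N \<Longrightarrow> \<phi> x \<le> \<phi> y"
    and ex: "\<And>\<epsilon>. \<epsilon> > 0 \<Longrightarrow> \<exists>\<delta>>0. \<forall>t. 0 < t \<and> t < \<delta> \<longrightarrow>
               \<phi> (x + (-t) \<cdot>\<^sub>v G) - \<phi> x \<le> - t * (G \<bullet> G) + \<epsilon> * t + K * t\<^sup>2"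
  shows "G = 0\<^sub>v N"
proof (rule ccontr)
  assume "G \<noteq> 0\<^sub>v N"
  hence NG: "G \<bullet> G > 0" using sp_eq0[of G] sp_self_ge0[of G] G by fastforce
  define n where "n = G \<bullet> G"
  obtain \<delta> where \<delta>: "\<delta> > 0" and H: "\<forall>t. 0 < t \<and> t < \<delta> \<longrightarrow>
      \<phi> (x + (-t) \<cdot>\<^sub>v G) - \<phi> x \<le> - t * n + n / 2 * t + K * t\<^sup>2"
    using ex[of "n / 2"] NG unfolding n_def by auto
  define t where "t = min (\<delta> / 2) (n / (4 * (\<bar>K\<bar> + 1)))"
  have t: "0 < t" "t < \<delta>" unfolding t_def using \<delta> NG n_def by auto
  have tK: "\<bar>K\<bar> * t \<le> n / 4"
  proof -
    have "t \<le> n / (4 * (\<bar>K\<bar> + 1))" unfolding t_def by simp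
    hence "(\<bar>K\<bar> + 1) * t \<le> n / 4" by (simp add: field_simps)
    moreover have "\<bar>K\<bar> * t \<le> (\<bar>K\<bar> + 1) * t" using t by simp
    ultimately show ?thesis by linarith
  qed
  have "0 \<le> \<phi> (x + (-t) \<cdot>\<^sub>v G) - \<phi> x" using min[of "x + (-t) \<cdot>\<^sub>v G"] x G by auto
  also have "\<dots> \<le> - t * n + n / 2 * t + K * t\<^sup>2" using H t(1,2) by blast
  also have "K * t\<^sup>2 \<le> (\<bar>K\<bar> * t) * t" using t by (simp add: power2_eq_square abs_mult_self_eq)
  also have "\<dots> \<le> n / 4 * t" using tK t by (intro mult_right_mono) auto
  finally have "0 \<le> - t * n + n / 2 * t + n / 4 * t" by simp
  moreover have "t * n > 0" using t NG n_def by simp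
  ultimately show False by (simp add: field_simps)
qed

lemma sp_add_r: "u \<in> carrier_vec n \<Longrightarrow> v \<in> carrier_vec n \<Longrightarrow> w \<in> carrier_vec n \<Longrightarrow>
   (w::real vec) \<bullet> (u + v) = w \<bullet> u + w \<bullet> v"
  by (rule scalar_prod_add_distrib)

lemma quad_part:
  fixes A :: "real mat"
  assumes A: "A \<in> carrier_mat d N" and c: "c \<in> carrier_vec d" and lam: "lam \<in> carrier_vec d"
    and x: "x \<in> carrier_vec N" and h: "h \<in> carrier_vec N"
  shows "(- (lam \<bullet> (c + A *\<^sub>v (x + h))) + \<beta> / 2 * (vnorm (c + A *\<^sub>v (x + h)))\<^sup>2)
       - (- (lam \<bullet> (c + A *\<^sub>v x)) + \<beta> / 2 * (vnorm (c + A *\<^sub>v x))\<^sup>2)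
       = (transpose_mat A *\<^sub>v (\<beta> \<cdot>\<^sub>v (c + A *\<^sub>v x) - lam)) \<bullet> h + \<beta> / 2 * ((A *\<^sub>v h) \<bullet> (A *\<^sub>v h))"
proof -
  define R where "R = c + A *\<^sub>v x"
  define H where "H = A *\<^sub>v h"
  have R: "R \<in> carrier_vec d" and Hc: "H \<in> carrier_vec d" unfolding R_def H_def using A c x h by auto
  have e1: "c + A *\<^sub>v (x + h) = R + H" unfolding R_def H_def
    using A c x h by (simp add: mult_add_distrib_mat_vec assoc_add_vec)
  have e2: "lam \<bullet> (R + H) = lam \<bullet> R + lam \<bullet> H"
    using sp_add_r[OF R Hc lam] by simp
  have "R + 1 \<cdot>\<^sub>v H = R + H" by simp
  hence e3: "(vnorm (R + H))\<^sup>2 = R \<bullet> R + 2 * (R \<bullet> H) + H \<bullet> H"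
    unfolding vnorm_sq using sp_exp[OF R Hc, of 1] by simp
  have e4: "(transpose_mat A *\<^sub>v (\<beta> \<cdot>\<^sub>v R - lam)) \<bullet> h = (\<beta> \<cdot>\<^sub>v R - lam) \<bullet> H"
    unfolding H_def by (rule transpose_vec_mult_scalar[OF A h]) (use R lam in auto)
  have e5: "(\<beta> \<cdot>\<^sub>v R - lam) \<bullet> H = \<beta> * (R \<bullet> H) - lam \<bullet> H"
    using R lam Hc by (simp add: minus_scalar_prod_distrib)
  show ?thesis unfolding e1 R_def[symmetric] H_def[symmetric] e2 e3 e4 e5 vnorm_sq[of R]
    by (simp add: algebra_simps)
qed

lemma breg_part:
  assumes "x \<in> carrier_vec N" "h \<in> carrier_vec N" "z \<in> carrier_vec N" "g \<in> carrier_vec N"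
  shows "(w (x + h) - w z - g \<bullet> (x + h - z)) - (w x - w z - g \<bullet> (x - z)) = w (x + h) - w x - g \<bullet> (h::real vec)"
proof -
  have "x + h - z = (x - z) + h" using assms by auto
  hence "g \<bullet> (x + h - z) = g \<bullet> (x - z) + g \<bullet> h" using sp_add_r[of "x - z" N h g] assms by auto
  thus ?thesis by simp
qed

lemma obj_zero_grad:
  fixes A :: "real mat" and f w :: "real vec \<Rightarrow> real"
  assumes A: "A \<in> carrier_mat d N" and c: "c \<in> carrier_vec d" and lam: "lam \<in> carrier_vec d"
    and x: "x \<in> carrier_vec N" and z: "z \<in> carrier_vec N" and gz: "gz \<in> carrier_vec N"
    and gf: "has_grad N f gfx x" and gw: "has_grad N w gwx x"
    and min: "\<And>y. y \<in> carrier_vec N \<Longrightarrow>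
       f x + (- (lam \<bullet> (c + A *\<^sub>v x)) + \<beta> / 2 * (vnorm (c + A *\<^sub>v x))\<^sup>2) + (w x - w z - gz \<bullet> (x - z))
       \<le> f y + (- (lam \<bullet> (c + A *\<^sub>v y)) + \<beta> / 2 * (vnorm (c + A *\<^sub>v y))\<^sup>2) + (w y - w z - gz \<bullet> (y - z))"
  shows "gfx + transpose_mat A *\<^sub>v (\<beta> \<cdot>\<^sub>v (c + A *\<^sub>v x) - lam) + gwx - gz = 0\<^sub>v N"
proof -
  define \<phi> where "\<phi> y = f y + (- (lam \<bullet> (c + A *\<^sub>v y)) + \<beta> / 2 * (vnorm (c + A *\<^sub>v y))\<^sup>2) + (w y - w z - gz \<bullet> (y - z))" for y
  define Q where "Q = transpose_mat A *\<^sub>v (\<beta> \<cdot>\<^sub>v (c + A *\<^sub>v x) - lam)"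
  have gfc: "gfx \<in> carrier_vec N" and gwc: "gwx \<in> carrier_vec N" using gf gw unfolding has_grad_def by auto
  have Qc: "Q \<in> carrier_vec N" unfolding Q_def using A c x lam by auto
  define G where "G = gfx + Q + gwx - gz"
  have Gc: "G \<in> carrier_vec N" unfolding G_def using gfc Qc gwc gz by auto
  define K where "K = \<beta> / 2 * ((A *\<^sub>v G) \<bullet> (A *\<^sub>v G))"
  have "G = 0\<^sub>v N"
  proof (rule opt_grad[OF x Gc, where \<phi> = \<phi> and K = K])
    show "\<phi> x \<le> \<phi> y" if "y \<in> carrier_vec N" for y using min[OF that] unfolding \<phi>_def .
    fix \<epsilon> :: real assume e: "\<epsilon> > 0"
    show "\<exists>\<delta>>0. \<forall>t. 0 < t \<and> t < \<delta> \<longrightarrow> \<phi> (x + (-t) \<cdot>\<^sub>v G) - \<phi> x \<le> - t * (G \<bullet> G) + \<epsilon> * t + K * t\<^sup>2"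
    proof (cases "vnorm G = 0")
      case True
      hence G0: "G = 0\<^sub>v N" using sp_eq0[of G] Gc unfolding vnorm_def by auto
      have z1: "x + (-t) \<cdot>\<^sub>v 0\<^sub>v N = x" for t using x by auto
      have z2: "A *\<^sub>v 0\<^sub>v N = 0\<^sub>v d" using A by (intro eq_vecI) auto
      show ?thesis using e by (intro exI[of _ 1]) (simp add: G0 K_def z1 z2)
    next
      case False
      hence nG: "vnorm G > 0" using vnorm_ge0[of G] by simp
      define e' where "e' = \<epsilon> / (2 * vnorm G)"
      have e': "e' > 0" unfolding e'_def using e nG by simp
      obtain d1 where d1: "d1 > 0" "\<forall>h\<in>carrier_vec N. vnorm h < d1 \<longrightarrow> \<bar>f (x + h) - f x - gfx \<bullet> h\<bar> \<le> e' * vnorm h"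
        using gf e' unfolding has_grad_def by blast
      obtain d2 where d2: "d2 > 0" "\<forall>h\<in>carrier_vec N. vnorm h < d2 \<longrightarrow> \<bar>w (x + h) - w x - gwx \<bullet> h\<bar> \<le> e' * vnorm h"
        using gw e' unfolding has_grad_def by blast
      show ?thesis
      proof (intro exI[of _ "min d1 d2 / vnorm G"] conjI allI impI)
        show "min d1 d2 / vnorm G > 0" using d1 d2 nG by simp
        fix t :: real assume t: "0 < t \<and> t < min d1 d2 / vnorm G"
        define h where "h = (-t) \<cdot>\<^sub>v G"
        have hc: "h \<in> carrier_vec N" unfolding h_def using Gc by auto
        have nh: "vnorm h = t * vnorm G" unfolding h_def using t by (simp add: vnorm_smult)
        have nh1: "vnorm h < d1" "vnorm h < d2" using t nG unfolding nh by (auto simp: field_simps)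
        have E1: "\<bar>f (x + h) - f x - gfx \<bullet> h\<bar> \<le> e' * vnorm h" using d1 hc nh1 by auto
        have E2: "\<bar>w (x + h) - w x - gwx \<bullet> h\<bar> \<le> e' * vnorm h" using d2 hc nh1 by auto
        have eb: "e' * vnorm h = \<epsilon> / 2 * t" unfolding e'_def nh using nG by (simp add: field_simps)
        have qp: "(- (lam \<bullet> (c + A *\<^sub>v (x + h))) + \<beta> / 2 * (vnorm (c + A *\<^sub>v (x + h)))\<^sup>2)
             - (- (lam \<bullet> (c + A *\<^sub>v x)) + \<beta> / 2 * (vnorm (c + A *\<^sub>v x))\<^sup>2)
             = Q \<bullet> h + \<beta> / 2 * ((A *\<^sub>v h) \<bullet> (A *\<^sub>v h))"
          unfolding Q_def by (rule quad_part[OF A c lam x hc])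
        have bp: "(w (x + h) - w z - gz \<bullet> (x + h - z)) - (w x - w z - gz \<bullet> (x - z)) = w (x + h) - w x - gz \<bullet> h"
          by (rule breg_part[OF x hc z gz])
        have Ah: "(A *\<^sub>v h) \<bullet> (A *\<^sub>v h) = t\<^sup>2 * ((A *\<^sub>v G) \<bullet> (A *\<^sub>v G))"
        proof -
          have "A *\<^sub>v h = (-t) \<cdot>\<^sub>v (A *\<^sub>v G)" unfolding h_def using A Gc by (rule mult_mat_vec)
          moreover have "A *\<^sub>v G \<in> carrier_vec d" using A Gc by auto
          ultimately show ?thesis by (simp add: power2_eq_square)
        qed
        have a1: "(gfx + Q) \<bullet> h = gfx \<bullet> h + Q \<bullet> h" by (rule add_scalar_prod_distrib[OF gfc Qc hc])
        have a2: "(gfx + Q + gwx) \<bullet> h = (gfx + Q) \<bullet> h + gwx \<bullet> h"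
          by (rule add_scalar_prod_distrib) (use gfc Qc gwc hc in auto)
        have a3: "(gfx + Q + gwx - gz) \<bullet> h = (gfx + Q + gwx) \<bullet> h - gz \<bullet> h"
          by (rule minus_scalar_prod_distrib) (use gfc Qc gwc gz hc in auto)
        have Gh: "G \<bullet> h = gfx \<bullet> h + Q \<bullet> h + gwx \<bullet> h - gz \<bullet> h"
          unfolding G_def a3 a2 a1 by simp
        have Gh2: "G \<bullet> h = - t * (G \<bullet> G)" unfolding h_def using Gc by simp
        have "\<phi> (x + h) - \<phi> x = (f (x + h) - f x - gfx \<bullet> h) + (w (x + h) - w x - gwx \<bullet> h)
              + G \<bullet> h + \<beta> / 2 * ((A *\<^sub>v h) \<bullet> (A *\<^sub>v h))"
          using qp bp Gh unfolding \<phi>_def by (simp add: algebra_simps)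
        also have "\<dots> \<le> \<epsilon> / 2 * t + \<epsilon> / 2 * t + (- t * (G \<bullet> G)) + K * t\<^sup>2"
        proof -
          have E1': "f (x + h) - f x - gfx \<bullet> h \<le> \<epsilon> / 2 * t"
            using abs_ge_self[of "f (x + h) - f x - gfx \<bullet> h"] E1 eb by linarith
          have E2': "w (x + h) - w x - gwx \<bullet> h \<le> \<epsilon> / 2 * t"
            using abs_ge_self[of "w (x + h) - w x - gwx \<bullet> h"] E2 eb by linarith
          have "\<beta> / 2 * ((A *\<^sub>v h) \<bullet> (A *\<^sub>v h)) = K * t\<^sup>2" unfolding Ah K_def by simp
          thus ?thesis using E1' E2' Gh2 by linarith
        qed
        finally show "\<phi> (x + (-t) \<cdot>\<^sub>v G) - \<phi> x \<le> - t * (G \<bullet> G) + \<epsilon> * t + K * t\<^sup>2"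
          unfolding h_def by simp
      qed
    qed
  qed
  thus ?thesis unfolding G_def Q_def .
qed


lemma residual_carrier: assumes "\<forall>i\<in>{1..p}. A i \<in> carrier_mat d (n i)" "b \<in> carrier_vec d"
   "\<forall>i\<in>{1..p}. xs i \<in> carrier_vec (n i)"
  shows "residual d p A b xs \<in> carrier_vec d"
proof -
  have "vsum d (\<lambda>i. A i *\<^sub>v xs i) {1..p} \<in> carrier_vec d"
  proof (rule vsum_carrier)
    fix i assume "i \<in> {1..p}"
    hence "A i \<in> carrier_mat d (n i)" "xs i \<in> carrier_vec (n i)" using assms by auto
    thus "A i *\<^sub>v xs i \<in> carrier_vec d" by (rule mult_mat_vec_carrier)
  qed
  thus ?thesis unfolding residual_def using assms by auto
qed

lemma lam_carrier: fixes lam :: "nat \<Rightarrow> real vec" and k :: nat assumes "lam 0 \<in> carrier_vec d"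
  and "\<forall>k\<ge>1. lam k = lam (k-1) - (\<theta> * \<beta>) \<cdot>\<^sub>v residual d p A b (x k)"
  and "\<And>k. residual d p A b (x k) \<in> carrier_vec d"
  shows "lam k \<in> carrier_vec d"
proof (induction k)
  case 0 thus ?case using assms by simp
next
  case (Suc k)
  have "lam (Suc k) = lam k - (\<theta> * \<beta>) \<cdot>\<^sub>v residual d p A b (x (Suc k))" using assms(2) by auto
  thus ?case using Suc assms(3)[of "Suc k"] by auto
qed

lemma ereal_sum_insert_inf:
  fixes g :: "nat \<Rightarrow> ereal"
  assumes "finite I" "i \<in> I" "g i = \<infinity>"
  shows "sum g I = \<infinity>"
  using assms by (simp add: sum_Pinfty) blast

lemma finiteness:
  fixes d p :: nat and n :: "nat \<Rightarrow> nat"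
    and f :: "nat \<Rightarrow> real vec \<Rightarrow> ereal" and fp :: "real vec \<Rightarrow> real"
    and A :: "nat \<Rightarrow> real mat" and b :: "real vec" and \<beta> :: real
    and w :: "nat \<Rightarrow> nat \<Rightarrow> real vec \<Rightarrow> real" and gw :: "nat \<Rightarrow> nat \<Rightarrow> real vec \<Rightarrow> real vec"
    and x :: "nat \<Rightarrow> nat \<Rightarrow> real vec" and lam :: "nat \<Rightarrow> real vec"
  assumes p2: "p \<ge> 2"
    and A0: "\<forall>i\<in>{1..p-1}. proper_fun (n i) (f i) \<and> lsc_fun (n i) (f i)"
    and A2_real: "\<forall>z\<in>carrier_vec (n p). f p z = ereal (fp z)"
    and x0: "\<forall>i\<in>{1..p}. x 0 i \<in> edom (n i) (f i)"
    and x_opt: "\<forall>k\<ge>1. \<forall>i\<in>{1..p}. x k i \<in> carrier_vec (n i) \<and>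
        (\<forall>y\<in>carrier_vec (n i).
           aug_lagr d p f A b \<beta> ((x (k-1))(i := x k i)) (lam (k-1))
             + ereal (bregman (w i k) (gw i k) (x (k-1) i) (x k i))
           \<le> aug_lagr d p f A b \<beta> ((x (k-1))(i := y)) (lam (k-1))
             + ereal (bregman (w i k) (gw i k) (x (k-1) i) y))"
  shows "\<forall>i\<in>{1..p}. x k i \<in> carrier_vec (n i) \<and> f i (x k i) \<noteq> \<infinity> \<and> f i (x k i) \<noteq> -\<infinity>"
proof -
  have ninf: "f i z \<noteq> -\<infinity>" if "i \<in> {1..p}" "z \<in> carrier_vec (n i)" for i z
  proof (cases "i = p")
    case True thus ?thesis using A2_real that by auto
  next
    case False
    hence "i \<in> {1..p-1}" using that by auto
    thus ?thesis using A0 that unfolding proper_fun_def by auto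
  qed
  show ?thesis
  proof (induction k)
    case 0 thus ?case using x0 ninf unfolding edom_def by auto
  next
    case (Suc k)
    show ?case
    proof
      fix i assume i: "i \<in> {1..p}"
      have xc: "x (Suc k) i \<in> carrier_vec (n i)" using x_opt i by auto
      have "f i (x (Suc k) i) \<noteq> \<infinity>"
      proof
        assume inf: "f i (x (Suc k) i) = \<infinity>"
        have opt: "aug_lagr d p f A b \<beta> ((x k)(i := x (Suc k) i)) (lam k)
             + ereal (bregman (w i (Suc k)) (gw i (Suc k)) (x k i) (x (Suc k) i))
           \<le> aug_lagr d p f A b \<beta> ((x k)(i := x k i)) (lam k)
             + ereal (bregman (w i (Suc k)) (gw i (Suc k)) (x k i) (x k i))"
          using x_opt i Suc by (metis diff_Suc_1 le_add1 plus_1_eq_Suc)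
        have "(\<Sum>j\<in>{1..p}. f j (((x k)(i := x (Suc k) i)) j)) = \<infinity>"
          by (rule ereal_sum_insert_inf[OF _ i]) (use inf in auto)
        hence L: "aug_lagr d p f A b \<beta> ((x k)(i := x (Suc k) i)) (lam k)
             + ereal (bregman (w i (Suc k)) (gw i (Suc k)) (x k i) (x (Suc k) i)) = \<infinity>"
          unfolding aug_lagr_def by simp
        have "(\<Sum>j\<in>{1..p}. f j (x k j)) \<noteq> \<infinity>" using Suc.IH by (simp add: sum_Pinfty)
        hence "aug_lagr d p f A b \<beta> ((x k)(i := x k i)) (lam k)
             + ereal (bregman (w i (Suc k)) (gw i (Suc k)) (x k i) (x k i)) \<noteq> \<infinity>"
          unfolding aug_lagr_def by simp
        thus False using opt L by simp
      qed
      thus "x (Suc k) i \<in> carrier_vec (n i) \<and> f i (x (Suc k) i) \<noteq> \<infinity> \<and> f i (x (Suc k) i) \<noteq> -\<infinity>"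
        using xc ninf[OF i xc] by auto
    qed
  qed
qed


lemma vsum_Ax_carrier: assumes "\<forall>i\<in>I. A i \<in> carrier_mat d (n i)" "\<forall>i\<in>I. xs i \<in> carrier_vec (n i)"
  shows "vsum d (\<lambda>i. A i *\<^sub>v xs i) I \<in> carrier_vec d"
proof (rule vsum_carrier)
  fix i assume "i \<in> I"
  hence "A i \<in> carrier_mat d (n i)" "xs i \<in> carrier_vec (n i)" using assms by auto
  thus "A i *\<^sub>v xs i \<in> carrier_vec d" by (rule mult_mat_vec_carrier)
qed

lemma vsum_split_p: fixes p :: nat assumes p: "p \<ge> 2" and g: "\<And>i. i \<in> {1..p} \<Longrightarrow> g i \<in> carrier_vec d"
  shows "vsum d g {1..p} = g p + vsum d g {1..p-1}"
proof -
  have "{1..p} = insert p {1..p-1}" using p by auto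
  moreover have "p \<notin> {1..p-1}" using p by auto
  moreover have "vsum d g (insert p {1..p-1}) = g p + vsum d g {1..p-1}"
    by (rule vsum_insert) (use g calculation in auto)
  ultimately show ?thesis by simp
qed

lemma opt_identity:
  fixes d p :: nat and n :: "nat \<Rightarrow> nat"
    and f :: "nat \<Rightarrow> real vec \<Rightarrow> ereal" and fp :: "real vec \<Rightarrow> real" and gradfp :: "real vec \<Rightarrow> real vec"
    and A :: "nat \<Rightarrow> real mat" and b :: "real vec" and \<beta> :: real and m M :: "nat \<Rightarrow> real"
    and w :: "nat \<Rightarrow> nat \<Rightarrow> real vec \<Rightarrow> real" and gw :: "nat \<Rightarrow> nat \<Rightarrow> real vec \<Rightarrow> real vec"
    and x :: "nat \<Rightarrow> nat \<Rightarrow> real vec" and lam :: "nat \<Rightarrow> real vec"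
  assumes p2: "p \<ge> 2"
    and A_dim: "\<forall>i\<in>{1..p}. A i \<in> carrier_mat d (n i)"
    and b_dim: "b \<in> carrier_vec d"
    and A2_real: "\<forall>z\<in>carrier_vec (n p). f p z = ereal (fp z)"
    and A2_grad: "\<forall>z\<in>carrier_vec (n p). has_grad (n p) fp (gradfp z) z"
    and w_class: "\<forall>k\<ge>1. \<forall>i\<in>{1..p}. dgf_class (n i) (edom (n i) (f i)) (m i) (M i) (w i k) (gw i k)"
    and x_opt: "\<forall>k\<ge>1. \<forall>i\<in>{1..p}. x k i \<in> carrier_vec (n i) \<and>
        (\<forall>y\<in>carrier_vec (n i).
           aug_lagr d p f A b \<beta> ((x (k-1))(i := x k i)) (lam (k-1))
             + ereal (bregman (w i k) (gw i k) (x (k-1) i) (x k i))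
           \<le> aug_lagr d p f A b \<beta> ((x (k-1))(i := y)) (lam (k-1))
             + ereal (bregman (w i k) (gw i k) (x (k-1) i) y))"
    and fin: "\<And>k. \<forall>i\<in>{1..p}. x k i \<in> carrier_vec (n i) \<and> f i (x k i) \<noteq> \<infinity> \<and> f i (x k i) \<noteq> -\<infinity>"
    and lamc: "\<And>k. lam k \<in> carrier_vec d"
    and k: "k \<ge> 1"
  shows "gradfp (x k p) + Rp (n p) p A \<beta> gradfp gw x lam k
      = transpose_mat (A p) *\<^sub>v (lam (k-1) - \<beta> \<cdot>\<^sub>v residual d p A b (x k))"
proof -
  define k' where "k' = k - 1"
  define N where "N = n p"
  define Ap where "Ap = A p"
  have pI: "p \<in> {1..p}" using p2 by auto
  have Ap: "Ap \<in> carrier_mat d N" using A_dim pI unfolding Ap_def N_def by auto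
  have Apt: "transpose_mat Ap \<in> carrier_mat N d" using Ap by auto
  have xc: "\<And>k i. i \<in> {1..p} \<Longrightarrow> x k i \<in> carrier_vec (n i)" using fin by auto
  have xkp: "x k p \<in> carrier_vec N" and z: "x k' p \<in> carrier_vec N" using xc pI unfolding N_def by auto
  have sub: "{1..p-1} \<subseteq> {1..p}" by auto
  have Axc: "\<And>i v. i \<in> {1..p} \<Longrightarrow> v \<in> carrier_vec (n i) \<Longrightarrow> A i *\<^sub>v v \<in> carrier_vec d"
    using A_dim mult_mat_vec_carrier by blast
  define V' where "V' = vsum d (\<lambda>j. A j *\<^sub>v x k' j) {1..p-1}"
  have V'c: "V' \<in> carrier_vec d" unfolding V'_def by (rule vsum_Ax_carrier) (use A_dim xc in auto)
  define c where "c = V' - b"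
  have cc: "c \<in> carrier_vec d" unfolding c_def using V'c b_dim by auto
  have lk: "lam k' \<in> carrier_vec d" by (rule lamc)
  have res_eq: "residual d p A b ((x k')(p := y)) = c + Ap *\<^sub>v y" if y: "y \<in> carrier_vec N" for y
  proof -
    have g: "\<And>i. i \<in> {1..p} \<Longrightarrow> A i *\<^sub>v ((x k')(p := y)) i \<in> carrier_vec d"
      using Axc xc y unfolding N_def by auto
    have "vsum d (\<lambda>i. A i *\<^sub>v ((x k')(p := y)) i) {1..p} = Ap *\<^sub>v y + vsum d (\<lambda>i. A i *\<^sub>v ((x k')(p := y)) i) {1..p-1}"
      using vsum_split_p[OF p2 g] unfolding Ap_def by simp
    also have "vsum d (\<lambda>i. A i *\<^sub>v ((x k')(p := y)) i) {1..p-1} = V'"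
      unfolding V'_def by (rule vsum_cong) (use Axc xc in auto)
    finally have "vsum d (\<lambda>i. A i *\<^sub>v ((x k')(p := y)) i) {1..p} = Ap *\<^sub>v y + V'" .
    moreover have "Ap *\<^sub>v y \<in> carrier_vec d" using Ap y by auto
    ultimately show ?thesis unfolding residual_def c_def using V'c b_dim Ap
      by (intro eq_vecI) auto
  qed
  define C0 where "C0 = (\<Sum>i\<in>{1..p-1}. real_of_ereal (f i (x k' i)))"
  have sum_eq: "(\<Sum>i\<in>{1..p}. f i (((x k')(p := y)) i)) = ereal C0 + ereal (fp y)" if y: "y \<in> carrier_vec N" for y
  proof -
    have "{1..p} = insert p {1..p-1}" using p2 by auto
    moreover have np: "p \<notin> {1..p-1}" using p2 by auto
    ultimately have "(\<Sum>i\<in>{1..p}. f i (((x k')(p := y)) i)) = f p y + (\<Sum>i\<in>{1..p-1}. f i (((x k')(p := y)) i))"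
      by (simp add: sum.insert[OF _ np])
    also have "(\<Sum>i\<in>{1..p-1}. f i (((x k')(p := y)) i)) = (\<Sum>i\<in>{1..p-1}. ereal (real_of_ereal (f i (x k' i))))"
    proof (rule sum.cong[OF refl])
      fix i assume i: "i \<in> {1..p-1}"
      hence "f i (x k' i) \<noteq> \<infinity>" "f i (x k' i) \<noteq> -\<infinity>" using fin[of k'] sub by auto
      moreover have "i \<noteq> p" using i by auto
      ultimately show "f i (((x k')(p := y)) i) = ereal (real_of_ereal (f i (x k' i)))"
        by (cases "f i (x k' i)") auto
    qed
    also have "\<dots> = ereal C0" unfolding C0_def by (rule sum_ereal)
    finally show ?thesis using A2_real y unfolding N_def by (simp add: add.commute)
  qed
  define \<Phi> where "\<Phi> y = fp y + (- (lam k' \<bullet> (c + Ap *\<^sub>v y)) + \<beta> / 2 * (vnorm (c + Ap *\<^sub>v y))\<^sup>2)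
     + (w p k y - w p k (x k' p) - gw p k (x k' p) \<bullet> (y - x k' p))" for y
  have aug_eq: "aug_lagr d p f A b \<beta> ((x k')(p := y)) (lam k') + ereal (bregman (w p k) (gw p k) (x k' p) y)
      = ereal (C0 + \<Phi> y)" if y: "y \<in> carrier_vec N" for y
    unfolding aug_lagr_def sum_eq[OF y] res_eq[OF y] \<Phi>_def bregman_def by simp
  have min: "\<Phi> (x k p) \<le> \<Phi> y" if y: "y \<in> carrier_vec N" for y
  proof -
    have "aug_lagr d p f A b \<beta> ((x k')(p := x k p)) (lam k') + ereal (bregman (w p k) (gw p k) (x k' p) (x k p))
       \<le> aug_lagr d p f A b \<beta> ((x k')(p := y)) (lam k') + ereal (bregman (w p k) (gw p k) (x k' p) y)"
      using x_opt k pI y unfolding k'_def N_def by blast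
    thus ?thesis unfolding aug_eq[OF y] aug_eq[OF xkp] by simp
  qed
  have gf: "has_grad N fp (gradfp (x k p)) (x k p)" using A2_grad xkp unfolding N_def by auto
  have edomp: "\<And>v. v \<in> carrier_vec N \<Longrightarrow> v \<in> edom (n p) (f p)"
    using A2_real unfolding edom_def N_def by auto
  have dgf: "dgf_class N (edom (n p) (f p)) (m p) (M p) (w p k) (gw p k)"
    using w_class k pI unfolding N_def by auto
  have gwg: "has_grad N (w p k) (gw p k (x k p)) (x k p)" using dgf edomp[OF xkp] unfolding dgf_class_def by auto
  have gz: "gw p k (x k' p) \<in> carrier_vec N"
    using dgf edomp[OF z] unfolding dgf_class_def has_grad_def by auto
  have E: "gradfp (x k p) + transpose_mat Ap *\<^sub>v (\<beta> \<cdot>\<^sub>v (c + Ap *\<^sub>v x k p) - lam k') + gw p k (x k p) - gw p k (x k' p) = 0\<^sub>v N"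
    by (rule obj_zero_grad[OF Ap cc lk xkp z gz gf gwg]) (use min in \<open>simp add: \<Phi>_def\<close>)
  define r where "r = residual d p A b (x k)"
  have rc: "r \<in> carrier_vec d" unfolding r_def by (rule residual_carrier[OF A_dim b_dim]) (use xc in auto)
  define \<Delta> where "\<Delta> j = x k j - x k' j" for j
  have \<Delta>c: "\<And>j. j \<in> {1..p} \<Longrightarrow> \<Delta> j \<in> carrier_vec (n j)" unfolding \<Delta>_def using xc by auto
  define Dv where "Dv = vsum d (\<lambda>j. A j *\<^sub>v \<Delta> j) {1..p-1}"
  have Dvc: "Dv \<in> carrier_vec d" unfolding Dv_def by (rule vsum_carrier) (use Axc \<Delta>c sub in auto)
  define Vk where "Vk = vsum d (\<lambda>j. A j *\<^sub>v x k j) {1..p-1}"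
  have Vkc: "Vk \<in> carrier_vec d" unfolding Vk_def by (rule vsum_carrier) (use Axc xc sub in auto)
  have Apx: "Ap *\<^sub>v x k p \<in> carrier_vec d" using Ap xkp by auto
  have r_eq: "r = (Ap *\<^sub>v x k p + Vk) - b"
  proof -
    have "vsum d (\<lambda>i. A i *\<^sub>v x k i) {1..p} = A p *\<^sub>v x k p + Vk"
      unfolding Vk_def by (rule vsum_split_p[OF p2]) (use Axc xc in auto)
    thus ?thesis unfolding r_def residual_def Ap_def by simp
  qed
  have Dv_eq: "Dv = Vk - V'"
  proof -
    have "Vk - V' = vsum d (\<lambda>j. A j *\<^sub>v x k j - A j *\<^sub>v x k' j) {1..p-1}"
      unfolding Vk_def V'_def by (rule vsum_diff) (use Axc xc sub in auto)
    also have "\<dots> = Dv" unfolding Dv_def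
    proof (rule vsum_cong)
      show "\<And>i. i \<in> {1..p-1} \<Longrightarrow> A i *\<^sub>v \<Delta> i \<in> carrier_vec d" using Axc \<Delta>c sub by auto
      fix j assume j: "j \<in> {1..p-1}"
      hence "A j \<in> carrier_mat d (n j)" "x k j \<in> carrier_vec (n j)" "x k' j \<in> carrier_vec (n j)"
        using A_dim xc sub by auto
      thus "A j *\<^sub>v x k j - A j *\<^sub>v x k' j = A j *\<^sub>v \<Delta> j" unfolding \<Delta>_def
        by (simp add: mult_minus_distrib_mat_vec)
    qed simp
    finally show ?thesis by simp
  qed
  have a: "c + Ap *\<^sub>v x k p = r - Dv"
    unfolding r_eq Dv_eq c_def using V'c Vkc b_dim Apx Ap by (intro eq_vecI) auto
  define Apt where "Apt = transpose_mat Ap"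
  have Apt: "Apt \<in> carrier_mat N d" unfolding Apt_def using Ap by auto
  have b': "vsum N (\<lambda>j. \<beta> \<cdot>\<^sub>v ((Apt * A j) *\<^sub>v \<Delta> j)) {1..p-1} = \<beta> \<cdot>\<^sub>v (Apt *\<^sub>v Dv)"
  proof -
    have "Apt *\<^sub>v Dv = vsum N (\<lambda>j. Apt *\<^sub>v (A j *\<^sub>v \<Delta> j)) {1..p-1}"
      unfolding Dv_def by (rule vsum_mult[OF Apt]) (use Axc \<Delta>c sub in auto)
    also have "\<dots> = vsum N (\<lambda>j. (Apt * A j) *\<^sub>v \<Delta> j) {1..p-1}"
    proof (rule vsum_cong)
      fix j assume j: "j \<in> {1..p-1}"
      hence Aj: "A j \<in> carrier_mat d (n j)" and dj: "\<Delta> j \<in> carrier_vec (n j)" using A_dim \<Delta>c sub by auto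
      show "(Apt * A j) *\<^sub>v \<Delta> j \<in> carrier_vec N" using Apt Aj dj by auto
      show "Apt *\<^sub>v (A j *\<^sub>v \<Delta> j) = (Apt * A j) *\<^sub>v \<Delta> j"
        by (rule assoc_mult_mat_vec[symmetric, OF Apt Aj dj])
    qed simp
    finally have "\<beta> \<cdot>\<^sub>v (Apt *\<^sub>v Dv) = \<beta> \<cdot>\<^sub>v vsum N (\<lambda>j. (Apt * A j) *\<^sub>v \<Delta> j) {1..p-1}" by simp
    also have "\<dots> = vsum N (\<lambda>j. \<beta> \<cdot>\<^sub>v ((Apt * A j) *\<^sub>v \<Delta> j)) {1..p-1}"
    proof (rule vsum_smult)
      fix j assume j: "j \<in> {1..p-1}"
      hence Aj: "A j \<in> carrier_mat d (n j)" and dj: "\<Delta> j \<in> carrier_vec (n j)" using A_dim \<Delta>c sub by auto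
      show "(Apt * A j) *\<^sub>v \<Delta> j \<in> carrier_vec N" using Apt Aj dj by auto
    qed simp
    finally show ?thesis by simp
  qed
  have Rk: "Rp (n p) p A \<beta> gradfp gw x lam k = - (\<beta> \<cdot>\<^sub>v (Apt *\<^sub>v Dv)) + (gw p k (x k p) - gw p k (x k' p))"
    using k b'[symmetric] unfolding Rp_def Apt_def Ap_def N_def \<Delta>_def k'_def by simp
  define P where "P = Apt *\<^sub>v r"
  define Q where "Q = Apt *\<^sub>v Dv"
  define L where "L = Apt *\<^sub>v lam k'"
  have PQL: "P \<in> carrier_vec N" "Q \<in> carrier_vec N" "L \<in> carrier_vec N"
    unfolding P_def Q_def L_def using Apt rc Dvc lk by auto
  have T: "Apt *\<^sub>v (\<beta> \<cdot>\<^sub>v (r - Dv) - lam k') = \<beta> \<cdot>\<^sub>v (P - Q) - L"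
  proof -
    have "Apt *\<^sub>v (\<beta> \<cdot>\<^sub>v (r - Dv) - lam k') = Apt *\<^sub>v (\<beta> \<cdot>\<^sub>v (r - Dv)) - Apt *\<^sub>v lam k'"
      by (rule mult_minus_distrib_mat_vec[OF Apt]) (use rc Dvc lk in auto)
    also have "Apt *\<^sub>v (\<beta> \<cdot>\<^sub>v (r - Dv)) = \<beta> \<cdot>\<^sub>v (Apt *\<^sub>v (r - Dv))"
      by (rule mult_mat_vec[OF Apt]) (use rc Dvc in auto)
    also have "Apt *\<^sub>v (r - Dv) = P - Q" unfolding P_def Q_def
      by (rule mult_minus_distrib_mat_vec[OF Apt rc Dvc])
    finally show ?thesis unfolding L_def .
  qed
  have T4: "Apt *\<^sub>v (lam k' - \<beta> \<cdot>\<^sub>v r) = L - \<beta> \<cdot>\<^sub>v P"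
  proof -
    have "Apt *\<^sub>v (lam k' - \<beta> \<cdot>\<^sub>v r) = Apt *\<^sub>v lam k' - Apt *\<^sub>v (\<beta> \<cdot>\<^sub>v r)"
      by (rule mult_minus_distrib_mat_vec[OF Apt]) (use rc lk in auto)
    also have "Apt *\<^sub>v (\<beta> \<cdot>\<^sub>v r) = \<beta> \<cdot>\<^sub>v P" unfolding P_def by (rule mult_mat_vec[OF Apt rc])
    finally show ?thesis unfolding L_def .
  qed
  have E2: "gradfp (x k p) + (\<beta> \<cdot>\<^sub>v (P - Q) - L) + gw p k (x k p) - gw p k (x k' p) = 0\<^sub>v N"
    using E unfolding a T[unfolded Apt_def] .
  have gfc: "gradfp (x k p) \<in> carrier_vec N" and gwc: "gw p k (x k p) \<in> carrier_vec N"
    using gf gwg unfolding has_grad_def by auto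
  have goal': "gradfp (x k p) + (- (\<beta> \<cdot>\<^sub>v Q) + (gw p k (x k p) - gw p k (x k' p))) = L - \<beta> \<cdot>\<^sub>v P"
  proof (rule eq_vecI)
    fix i assume "i < dim_vec (L - \<beta> \<cdot>\<^sub>v P)"
    hence i: "i < N" using PQL by simp
    have "(gradfp (x k p) + (\<beta> \<cdot>\<^sub>v (P - Q) - L) + gw p k (x k p) - gw p k (x k' p)) $ i = 0"
      using E2 i by simp
    hence "gradfp (x k p) $ i + (\<beta> * (P $ i - Q $ i) - L $ i) + gw p k (x k p) $ i - gw p k (x k' p) $ i = 0"
      using i PQL gfc gwc gz by simp
    thus "(gradfp (x k p) + (- (\<beta> \<cdot>\<^sub>v Q) + (gw p k (x k p) - gw p k (x k' p)))) $ i = (L - \<beta> \<cdot>\<^sub>v P) $ i"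
      using i PQL gfc gwc gz by (simp add: algebra_simps)
  qed (use PQL gfc gwc gz in simp)
  have R2: "Rp (n p) p A \<beta> gradfp gw x lam k = - (\<beta> \<cdot>\<^sub>v Q) + (gw p k (x k p) - gw p k (x k' p))"
    using Rk unfolding Q_def .
  have T5: "transpose_mat (A p) *\<^sub>v (lam (k-1) - \<beta> \<cdot>\<^sub>v residual d p A b (x k)) = L - \<beta> \<cdot>\<^sub>v P"
    using T4 unfolding Apt_def Ap_def k'_def r_def .
  show ?thesis unfolding R2 T5 by (rule goal')
qed


lemma img_res:
  fixes p :: nat
  assumes p2: "p \<ge> 2" and A_dim: "\<forall>i\<in>{1..p}. A i \<in> carrier_mat d (n i)"
    and A1_b: "\<exists>y\<in>carrier_vec (n p). A p *\<^sub>v y = b"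
    and A1_im: "\<forall>i\<in>{1..p-1}. \<forall>z\<in>carrier_vec (n i). \<exists>y\<in>carrier_vec (n p). A p *\<^sub>v y = A i *\<^sub>v z"
    and xs: "\<forall>i\<in>{1..p}. xs i \<in> carrier_vec (n i)"
  shows "\<exists>y\<in>carrier_vec (n p). A p *\<^sub>v y = residual d p A b xs"
proof -
  have pI: "p \<in> {1..p}" using p2 by auto
  have Ap: "A p \<in> carrier_mat d (n p)" using A_dim pI by auto
  have each: "\<exists>y\<in>carrier_vec (n p). A p *\<^sub>v y = A i *\<^sub>v xs i" if i: "i \<in> {1..p}" for i
  proof (cases "i = p")
    case True thus ?thesis using xs pI by auto
  next
    case False hence "i \<in> {1..p-1}" using i by auto
    thus ?thesis using A1_im xs i by auto
  qed
  have "finite I \<Longrightarrow> I \<subseteq> {1..p} \<Longrightarrow> \<exists>y\<in>carrier_vec (n p). A p *\<^sub>v y = vsum d (\<lambda>i. A i *\<^sub>v xs i) I" for I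
  proof (induction I rule: finite_induct)
    case empty
    have "A p *\<^sub>v 0\<^sub>v (n p) = 0\<^sub>v d" using Ap by (intro eq_vecI) auto
    thus ?case by (auto simp: vsum_empty)
  next
    case (insert i F)
    then obtain yF where yF: "yF \<in> carrier_vec (n p)" "A p *\<^sub>v yF = vsum d (\<lambda>i. A i *\<^sub>v xs i) F" by auto
    obtain yi where yi: "yi \<in> carrier_vec (n p)" "A p *\<^sub>v yi = A i *\<^sub>v xs i" using each insert by auto
    have "vsum d (\<lambda>i. A i *\<^sub>v xs i) (insert i F) = A i *\<^sub>v xs i + vsum d (\<lambda>i. A i *\<^sub>v xs i) F"
    proof (rule vsum_insert[OF insert(1,2)])
      fix j assume "j \<in> insert i F"
      hence "A j \<in> carrier_mat d (n j)" "xs j \<in> carrier_vec (n j)" using insert A_dim xs by auto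
      thus "A j *\<^sub>v xs j \<in> carrier_vec d" by (rule mult_mat_vec_carrier)
    qed
    also have "\<dots> = A p *\<^sub>v (yi + yF)" using Ap yi yF by (simp add: mult_add_distrib_mat_vec)
    finally show ?case using yi yF by auto
  qed
  from this[of "{1..p}"] obtain y where y: "y \<in> carrier_vec (n p)" "A p *\<^sub>v y = vsum d (\<lambda>i. A i *\<^sub>v xs i) {1..p}"
    by auto
  obtain yb where yb: "yb \<in> carrier_vec (n p)" "A p *\<^sub>v yb = b" using A1_b by auto
  have "A p *\<^sub>v (y - yb) = residual d p A b xs" unfolding residual_def
    using Ap y yb by (simp add: mult_minus_distrib_mat_vec)
  thus ?thesis using y yb by auto
qed

lemma sigma_pos:
  assumes Ap: "B \<in> carrier_mat d N" and nz: "B \<noteq> 0\<^sub>m d N"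
  shows "sigma_plus B > 0"
proof -
  obtain i j where ij: "i < d" "j < N" "B $$ (i,j) \<noteq> 0"
  proof (rule ccontr)
    assume "\<not> thesis"
    hence "\<forall>i<d. \<forall>j<N. B $$ (i,j) = 0" using that by blast
    hence "B = 0\<^sub>m d N" using Ap by (intro eq_matI) auto
    thus False using nz by simp
  qed
  define y :: "real vec" where "y = unit_vec N j"
  have yc: "y \<in> carrier_vec N" unfolding y_def by simp
  define v where "v = B *\<^sub>v y"
  have vc: "v \<in> carrier_vec d" unfolding v_def using Ap yc by auto
  have "v $ i = B $$ (i,j)" unfolding v_def y_def using Ap ij by simp
  hence "v \<noteq> 0\<^sub>v d" using ij by auto
  hence "\<not> v \<bullet> v = 0" using sp_eq0[of v] vc by auto
  hence "v \<bullet> v > 0" using sp_self_ge0[of v] by simp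
  thus ?thesis using sigma_bound[OF Ap yc v_def] by simp
qed


theorem mainTheorem4:
  fixes d p :: nat and n :: "nat \<Rightarrow> nat"
    and f :: "nat \<Rightarrow> real vec \<Rightarrow> ereal" and fp :: "real vec \<Rightarrow> real" and gradfp :: "real vec \<Rightarrow> real vec"
    and A :: "nat \<Rightarrow> real mat" and b :: "real vec"
    and Lp \<beta>bar \<alpha> \<beta> \<theta> :: real and m M :: "nat \<Rightarrow> real"
    and w :: "nat \<Rightarrow> nat \<Rightarrow> real vec \<Rightarrow> real" and gw :: "nat \<Rightarrow> nat \<Rightarrow> real vec \<Rightarrow> real vec"
    and x :: "nat \<Rightarrow> nat \<Rightarrow> real vec" and lam :: "nat \<Rightarrow> real vec"
  assumes p2: "p \<ge> 2"
    and A_dim: "\<forall>i\<in>{1..p}. A i \<in> carrier_mat d (n i)"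
    and b_dim: "b \<in> carrier_vec d"
    \<comment> \<open>(A0)\<close>
    and A0: "\<forall>i\<in>{1..p-1}. proper_fun (n i) (f i) \<and> lsc_fun (n i) (f i)"
    \<comment> \<open>(A1)\<close>
    and A1_nz: "A p \<noteq> 0\<^sub>m d (n p)"
    and A1_b: "\<exists>y\<in>carrier_vec (n p). A p *\<^sub>v y = b"
    and A1_im: "\<forall>i\<in>{1..p-1}. \<forall>z\<in>carrier_vec (n i). \<exists>y\<in>carrier_vec (n p). A p *\<^sub>v y = A i *\<^sub>v z"
    \<comment> \<open>(A2): f_p real-valued, differentiable with L_p-Lipschitz gradient gradfp\<close>
    and A2_real: "\<forall>z\<in>carrier_vec (n p). f p z = ereal (fp z)"
    and A2_grad: "\<forall>z\<in>carrier_vec (n p). has_grad (n p) fp (gradfp z) z"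
    and A2_lip: "\<forall>z\<in>carrier_vec (n p). \<forall>z'\<in>carrier_vec (n p).
                   vnorm (gradfp z - gradfp z') \<le> Lp * vnorm (z - z')"
    \<comment> \<open>(A3)\<close>
    and A3: "\<beta>bar \<ge> 0" "val_fun d n p f A b \<beta>bar > -\<infinity>"
    \<comment> \<open>parameters of NEPJ-ADMM\<close>
    and x0: "\<forall>i\<in>{1..p}. x 0 i \<in> edom (n i) (f i)"
    and lam0: "lam 0 \<in> carrier_vec d"
    and alpha: "\<alpha> > 0"
    and beta: "\<beta> \<ge> \<beta>bar" "\<beta> > 0"
    and mM: "\<forall>i\<in>{1..p}. 0 < m i \<and> m i \<le> M i"
    and theta: "0 < \<theta>" "\<theta> < 2"
    and delta_i: "\<forall>i\<in>{1..p-1}. m i / 4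
        - ((real p - 2 + \<alpha>) / 2 + 2 * gamma_theta \<theta> * (real p + 1) / sigma_plus (A p)
              * (opnorm (transpose_mat (A p)))\<^sup>2)
          * \<beta> * Max ((\<lambda>l. (opnorm (A l))\<^sup>2) ` {1..p-1}) > 0"
    and delta_p: "m p / 4 - (\<beta> * (real p - 1) * (opnorm (A p))\<^sup>2 / (2 * \<alpha>)
        + gamma_theta \<theta> * (real p + 1) * (Lp\<^sup>2 + 2 * (M p)\<^sup>2) / (\<beta> * sigma_plus (A p))) > 0"
    \<comment> \<open>the iteration, k \<ge> 1\<close>
    and w_class: "\<forall>k\<ge>1. \<forall>i\<in>{1..p}. dgf_class (n i) (edom (n i) (f i)) (m i) (M i) (w i k) (gw i k)"
    and x_opt: "\<forall>k\<ge>1. \<forall>i\<in>{1..p}. x k i \<in> carrier_vec (n i) \<and>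
        (\<forall>y\<in>carrier_vec (n i).
           aug_lagr d p f A b \<beta> ((x (k-1))(i := x k i)) (lam (k-1))
             + ereal (bregman (w i k) (gw i k) (x (k-1) i) (x k i))
           \<le> aug_lagr d p f A b \<beta> ((x (k-1))(i := y)) (lam (k-1))
             + ereal (bregman (w i k) (gw i k) (x (k-1) i) y))"
    and lam_upd: "\<forall>k\<ge>1. lam k = lam (k-1) - (\<theta> * \<beta>) \<cdot>\<^sub>v residual d p A b (x k)"
  shows "\<forall>k\<ge>1.
     (let R = Rp (n p) p A \<beta> gradfp gw x lam;
          dx = (\<lambda>k i. if k = 0 then (if i < p then 0\<^sub>v (n i) else (1 / M p) \<cdot>\<^sub>v R 0)
                       else x k i - x (k-1) i);
          dlam = (\<lambda>k. if k = 0 then 0\<^sub>v d else lam k - lam (k-1));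
          u = (\<lambda>k. gradfp (x k p) - gradfp (x (k-1) p) + R k - R (k-1));
          c1 = 2 * \<bar>\<theta> - 1\<bar> / (\<beta> * \<theta> * (1 - \<bar>\<theta> - 1\<bar>) * sigma_plus (A p));
          Theta = 1 / (\<beta> * \<theta>) * (vnorm (dlam k))\<^sup>2
                  + c1 / 2 * ((vnorm (transpose_mat (A p) *\<^sub>v dlam k))\<^sup>2
                              - (vnorm (transpose_mat (A p) *\<^sub>v dlam (k-1)))\<^sup>2)
      in Theta \<le> gamma_theta \<theta> / (\<beta> * sigma_plus (A p)) * (vnorm (u k))\<^sup>2 \<and>
         gamma_theta \<theta> / (\<beta> * sigma_plus (A p)) * (vnorm (u k))\<^sup>2
           \<le> gamma_theta \<theta> * (real p + 1) / (\<beta> * sigma_plus (A p)) *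
              ((\<Sum>j\<in>{1..p-1}. \<beta>\<^sup>2 * (opnorm (transpose_mat (A p) * A j))\<^sup>2
                     * (vnorm (dx k j) + vnorm (dx (k-1) j))\<^sup>2)
               + (Lp\<^sup>2 + (M p)\<^sup>2) * (vnorm (dx k p) + vnorm (dx (k-1) p))\<^sup>2))"
proof -
  define N where "N = n p"
  have pI: "p \<in> {1..p}" using p2 by auto
  have sub: "{1..p-1} \<subseteq> {1..p}" by auto
  have Ap: "A p \<in> carrier_mat d N" using A_dim pI unfolding N_def by auto
  define Apt where "Apt = transpose_mat (A p)"
  have Apt: "Apt \<in> carrier_mat N d" unfolding Apt_def using Ap by auto
  have fin: "\<And>k. \<forall>i\<in>{1..p}. x k i \<in> carrier_vec (n i) \<and> f i (x k i) \<noteq> \<infinity> \<and> f i (x k i) \<noteq> -\<infinity>"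
    by (rule finiteness[OF p2 A0 A2_real x0 x_opt])
  have xc: "\<And>k i. i \<in> {1..p} \<Longrightarrow> x k i \<in> carrier_vec (n i)" using fin by auto
  have rc: "\<And>k. residual d p A b (x k) \<in> carrier_vec d"
    by (rule residual_carrier[OF A_dim b_dim]) (use xc in auto)
  have lamc: "\<And>k. lam k \<in> carrier_vec d" by (rule lam_carrier[OF lam0 lam_upd rc])
  have opt: "\<And>k. k \<ge> 1 \<Longrightarrow> gradfp (x k p) + Rp (n p) p A \<beta> gradfp gw x lam k
      = transpose_mat (A p) *\<^sub>v (lam (k-1) - \<beta> \<cdot>\<^sub>v residual d p A b (x k))"
    by (rule opt_identity[OF p2 A_dim b_dim A2_real A2_grad w_class x_opt fin lamc])
  have sigpos: "sigma_plus (A p) > 0" by (rule sigma_pos[OF Ap A1_nz[folded N_def]])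
  define R where "R = Rp (n p) p A \<beta> gradfp gw x lam"
  define dx where "dx = (\<lambda>k i. if k = 0 then (if i < p then 0\<^sub>v (n i) else (1 / M p) \<cdot>\<^sub>v R 0)
                       else x k i - x (k-1) i)"
  define dlam where "dlam = (\<lambda>k. if k = 0 then 0\<^sub>v d else lam k - lam (k-1))"
  define u where "u = (\<lambda>k. gradfp (x k p) - gradfp (x (k-1) p) + R k - R (k-1))"
  have gfc: "\<And>z. z \<in> carrier_vec N \<Longrightarrow> gradfp z \<in> carrier_vec N"
    using A2_grad unfolding has_grad_def N_def by auto
  have xpc: "\<And>k. x k p \<in> carrier_vec N" using xc pI unfolding N_def by auto
  define Lv where "Lv = (\<lambda>j. if j = 0 then lam 0 else lam (j-1) - \<beta> \<cdot>\<^sub>v residual d p A b (x j))"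
  have Lvc: "\<And>j. Lv j \<in> carrier_vec d" unfolding Lv_def using lamc rc by auto
  have P: "gradfp (x j p) + R j = Apt *\<^sub>v Lv j" for j
  proof (cases "j = 0")
    case True
    have R0: "R 0 = Apt *\<^sub>v lam 0 - gradfp (x 0 p)" unfolding R_def Rp_def Apt_def by simp
    have d1: "dim_vec (gradfp (x 0 p)) = N" using gfc[OF xpc] by simp
    have d2: "dim_vec (Apt *\<^sub>v lam 0) = N" using Apt by simp
    show ?thesis unfolding True R0 Lv_def using d1 d2 by (intro eq_vecI) auto
  next
    case False
    hence j1: "j \<ge> 1" by simp
    have "Lv j = lam (j-1) - \<beta> \<cdot>\<^sub>v residual d p A b (x j)" unfolding Lv_def using False by simp
    thus ?thesis using opt[OF j1] unfolding R_def Apt_def by simp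
  qed
  have Rc: "R j \<in> carrier_vec N" for j
  proof -
    have "dim_vec (gradfp (x j p) + R j) = N" unfolding P using Apt by simp
    hence "dim_vec (R j) = N" by simp
    thus ?thesis by (rule carrier_vecI)
  qed
  have dlamc: "\<And>k. dlam k \<in> carrier_vec d" unfolding dlam_def using lamc by auto
  have dg: "\<And>k. dim_vec (gradfp (x k p)) = N" using gfc[OF xpc] by simp
  have dR: "\<And>j. dim_vec (R j) = N" using Rc by simp
  have dL: "\<And>j. dim_vec (Lv j) = d" using Lvc by simp
  have dD: "\<And>j. dim_vec (dlam j) = d" using dlamc by simp
  have dl: "\<And>j. dim_vec (lam j) = d" using lamc by simp
  have dr: "\<And>j. dim_vec (residual d p A b (x j)) = d" using rc by simp
  have upd: "\<And>j. j \<ge> 1 \<Longrightarrow> lam j = lam (j-1) - (\<theta> * \<beta>) \<cdot>\<^sub>v residual d p A b (x j)" using lam_upd by auto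
  have uL: "u k = Apt *\<^sub>v (Lv k - Lv (k-1))" if k: "k \<ge> 1" for k
  proof -
    have "Apt *\<^sub>v (Lv k - Lv (k-1)) = Apt *\<^sub>v Lv k - Apt *\<^sub>v Lv (k-1)"
      by (rule mult_minus_distrib_mat_vec[OF Apt Lvc Lvc])
    also have "\<dots> = (gradfp (x k p) + R k) - (gradfp (x (k-1) p) + R (k-1))" unfolding P ..
    also have "\<dots> = u k" unfolding u_def by (intro eq_vecI) (auto simp: dg dR)
    finally show ?thesis by simp
  qed
  have \<theta>0: "\<theta> \<noteq> 0" using theta by simp
  have Ld: "\<theta> \<cdot>\<^sub>v (Lv k - Lv (k-1)) = dlam k - (1 - \<theta>) \<cdot>\<^sub>v dlam (k-1)" if k: "k \<ge> 1" for k
  proof (rule eq_vecI)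
    show "dim_vec (\<theta> \<cdot>\<^sub>v (Lv k - Lv (k-1))) = dim_vec (dlam k - (1 - \<theta>) \<cdot>\<^sub>v dlam (k-1))"
      by (simp add: dL dD)
    fix i assume "i < dim_vec (dlam k - (1 - \<theta>) \<cdot>\<^sub>v dlam (k-1))"
    hence i: "i < d" by (simp add: dD)
    have lk: "lam k $ i = lam (k-1) $ i - \<theta> * \<beta> * residual d p A b (x k) $ i"
      using upd[OF k] i by (simp add: dl dr)
    show "(\<theta> \<cdot>\<^sub>v (Lv k - Lv (k-1))) $ i = (dlam k - (1 - \<theta>) \<cdot>\<^sub>v dlam (k-1)) $ i"
    proof (cases "k = 1")
      case True
      thus ?thesis using i lk \<theta>0 unfolding Lv_def dlam_def by (simp add: field_simps dl dr)
    next
      case False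
      hence k2: "k - 1 \<ge> 1" using k by simp
      have lk1: "lam (k-1) $ i = lam (k-1-1) $ i - \<theta> * \<beta> * residual d p A b (x (k-1)) $ i"
        using upd[OF k2] i by (simp add: dl dr)
      have "k \<noteq> 0" "k - 1 \<noteq> 0" using k k2 by auto
      thus ?thesis using i lk lk1 \<theta>0 unfolding Lv_def dlam_def by (simp add: field_simps dl dr)
    qed
  qed
  have uid: "\<theta> \<cdot>\<^sub>v u k = Apt *\<^sub>v dlam k - (1 - \<theta>) \<cdot>\<^sub>v (Apt *\<^sub>v dlam (k-1))" if k: "k \<ge> 1" for k
  proof -
    have "\<theta> \<cdot>\<^sub>v u k = Apt *\<^sub>v (\<theta> \<cdot>\<^sub>v (Lv k - Lv (k-1)))"
      unfolding uL[OF k] using Apt Lvc by (simp add: mult_mat_vec)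
    also have "\<dots> = Apt *\<^sub>v (dlam k - (1 - \<theta>) \<cdot>\<^sub>v dlam (k-1))" unfolding Ld[OF k] ..
    also have "\<dots> = Apt *\<^sub>v dlam k - Apt *\<^sub>v ((1 - \<theta>) \<cdot>\<^sub>v dlam (k-1))"
      by (rule mult_minus_distrib_mat_vec[OF Apt]) (use dlamc in auto)
    also have "Apt *\<^sub>v ((1 - \<theta>) \<cdot>\<^sub>v dlam (k-1)) = (1 - \<theta>) \<cdot>\<^sub>v (Apt *\<^sub>v dlam (k-1))"
      by (rule mult_mat_vec[OF Apt dlamc])
    finally show ?thesis .
  qed
  have img: "\<exists>y\<in>carrier_vec N. dlam k = A p *\<^sub>v y" for k
  proof (cases "k = 0")
    case True
    have "A p *\<^sub>v 0\<^sub>v N = 0\<^sub>v d" using Ap by (intro eq_vecI) auto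
    thus ?thesis unfolding dlam_def using True by (intro bexI[of _ "0\<^sub>v N"]) auto
  next
    case False
    obtain y where y: "y \<in> carrier_vec N" "A p *\<^sub>v y = residual d p A b (x k)"
      using img_res[OF p2 A_dim A1_b A1_im] xc unfolding N_def by blast
    have "dlam k = A p *\<^sub>v ((- (\<theta> * \<beta>)) \<cdot>\<^sub>v y)"
      unfolding dlam_def using False upd[of k] y Ap lamc rc
      by (intro eq_vecI) (auto simp: mult_mat_vec dl dr)
    thus ?thesis using y by auto
  qed
  have first: "1 / (\<beta> * \<theta>) * (vnorm (dlam k))\<^sup>2
      + 2 * \<bar>\<theta> - 1\<bar> / (\<beta> * \<theta> * (1 - \<bar>\<theta> - 1\<bar>) * sigma_plus (A p)) / 2 *
         ((vnorm (transpose_mat (A p) *\<^sub>v dlam k))\<^sup>2 - (vnorm (transpose_mat (A p) *\<^sub>v dlam (k-1)))\<^sup>2)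
      \<le> gamma_theta \<theta> / (\<beta> * sigma_plus (A p)) * (vnorm (u k))\<^sup>2" if k: "k \<ge> 1" for k
  proof -
    obtain y where y: "y \<in> carrier_vec N" "dlam k = A p *\<^sub>v y" using img by blast
    have h1: "sigma_plus (A p) * (dlam k \<bullet> dlam k) \<le> (Apt *\<^sub>v dlam k) \<bullet> (Apt *\<^sub>v dlam k)"
      using sigma_bound[OF Ap y(1) y(2)] unfolding Apt_def by simp
    have uc: "u k \<in> carrier_vec N" unfolding u_def using gfc[OF xpc] Rc by auto
    show ?thesis using vec_first_ineq[OF beta(2) theta sigpos _ _ uc h1 uid[OF k]] Apt dlamc
      unfolding Apt_def by auto
  qed
  define Mj where "Mj j = Apt * A j" for j
  have Mjc: "Mj j \<in> carrier_mat N (n j)" if "j \<in> {1..p-1}" for j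
    unfolding Mj_def using Apt A_dim that sub by auto
  define t where "t k j = \<beta> \<cdot>\<^sub>v (Mj j *\<^sub>v (x k j - x (k-1) j))" for k j
  have tc: "t k j \<in> carrier_vec N" if "j \<in> {1..p-1}" for k j
    unfolding t_def using Mjc[OF that] xc[of j] that by auto
  have dxk: "dx k j = x k j - x (k-1) j" if "k \<ge> 1" for k j using that unfolding dx_def by simp
  have nt: "vnorm (t k j) \<le> \<beta> * opnorm (Mj j) * vnorm (dx k j)" if k: "k \<ge> 1" and j: "j \<in> {1..p-1}" for k j
  proof -
    have "vnorm (t k j) = \<beta> * vnorm (Mj j *\<^sub>v (x k j - x (k-1) j))"
      unfolding t_def vnorm_smult using beta by simp
    also have "\<dots> \<le> \<beta> * (opnorm (Mj j) * vnorm (x k j - x (k-1) j))"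
      using opnorm_bound[OF Mjc[OF j]] xc[of j] j beta by (intro mult_left_mono) auto
    finally show ?thesis unfolding dxk[OF k] by simp
  qed
  define V where "V k = vsum N (t k) {1..p-1}" for k
  have Vc: "V k \<in> carrier_vec N" for k unfolding V_def by (rule vsum_carrier) (rule tc)
  define SV where "SV k = (\<Sum>j\<in>{1..p-1}. \<beta> * opnorm (Mj j) * vnorm (dx k j))" for k
  have nV: "vnorm (V k) \<le> SV k" if k: "k \<ge> 1" for k
  proof -
    have "vnorm (V k) \<le> (\<Sum>j\<in>{1..p-1}. vnorm (t k j))" unfolding V_def by (rule vnorm_vsum) (auto intro: tc)
    also have "\<dots> \<le> SV k" unfolding SV_def by (rule sum_mono) (rule nt[OF k])
    finally show ?thesis .
  qed
  have edomp: "\<And>v. v \<in> carrier_vec N \<Longrightarrow> v \<in> edom (n p) (f p)"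
    using A2_real unfolding edom_def N_def by auto
  have dgf: "dgf_class N (edom (n p) (f p)) (m p) (M p) (w p k) (gw p k)" if "k \<ge> 1" for k
    using w_class that pI unfolding N_def by auto
  have gwc: "gw p k z \<in> carrier_vec N" if "k \<ge> 1" "z \<in> carrier_vec N" for k z
    using dgf[OF that(1)] edomp[OF that(2)] unfolding dgf_class_def has_grad_def by auto
  define W where "W k = gw p k (x k p) - gw p k (x (k-1) p)" for k
  have Wc: "W k \<in> carrier_vec N" if "k \<ge> 1" for k unfolding W_def using gwc[OF that] xpc by auto
  have nW: "vnorm (W k) \<le> M p * vnorm (dx k p)" if k: "k \<ge> 1" for k
    using dgf[OF k] edomp[OF xpc] edomp[OF xpc] unfolding dgf_class_def W_def dxk[OF k] by blast
  define G where "G k = gradfp (x k p) - gradfp (x (k-1) p)" for k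
  have Gc: "G k \<in> carrier_vec N" for k unfolding G_def using gfc[OF xpc] gfc[OF xpc] by auto
  have nG: "vnorm (G k) \<le> \<bar>Lp\<bar> * vnorm (dx k p)" if k: "k \<ge> 1" for k
  proof -
    have "vnorm (G k) \<le> Lp * vnorm (x k p - x (k-1) p)"
      unfolding G_def using A2_lip xpc unfolding N_def by blast
    also have "\<dots> \<le> \<bar>Lp\<bar> * vnorm (x k p - x (k-1) p)" using vnorm_ge0 by (intro mult_right_mono) auto
    finally show ?thesis unfolding dxk[OF k] .
  qed
  have RV: "R k = - V k + W k" if k: "k \<ge> 1" for k
    using k unfolding R_def Rp_def V_def W_def t_def Mj_def Apt_def N_def by simp
  have tri3: "vnorm (a + b + c) \<le> vnorm a + vnorm b + vnorm c"
    if "a \<in> carrier_vec N" "b \<in> carrier_vec N" "c \<in> carrier_vec N" for a b c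
  proof -
    have "vnorm (a + b + c) \<le> vnorm (a + b) + vnorm c" using that by (intro vnorm_add[of _ N]) auto
    also have "vnorm (a + b) \<le> vnorm a + vnorm b" using that by (intro vnorm_add[of _ N]) auto
    finally show ?thesis by simp
  qed
  have dVW: "\<And>k. dim_vec (V k) = N" "\<And>k. k \<ge> 1 \<Longrightarrow> dim_vec (W k) = N" "\<And>k. dim_vec (G k) = N"
    using Vc Wc Gc by auto
  have bound: "vnorm (u k) \<le> (\<Sum>j\<in>{1..p-1}. \<beta> * opnorm (Mj j) * (vnorm (dx k j) + vnorm (dx (k-1) j)))
      + \<bar>Lp\<bar> * vnorm (dx k p) + M p * (vnorm (dx k p) + vnorm (dx (k-1) p))" if k: "k \<ge> 1" for k
  proof (cases "k = 1")
    case True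
    have W1: "dim_vec (W 1) = N" using dVW by simp
    have ueq: "u 1 = G 1 + (- V 1) + (W 1 - R 0)"
      unfolding u_def G_def using RV[of 1] by (intro eq_vecI) (auto simp: dg dR dVW W1)
    have "vnorm (u 1) \<le> vnorm (G 1) + vnorm (- V 1) + vnorm (W 1 - R 0)"
      unfolding ueq by (rule tri3) (use Gc Vc Wc Rc in auto)
    also have "vnorm (- V 1) \<le> SV 1" using nV[of 1] vnorm_uminus by simp
    also have "vnorm (W 1 - R 0) \<le> vnorm (W 1) + vnorm (R 0)" using Wc[of 1] Rc by (intro vnorm_minus[of _ N]) auto
    also have "vnorm (R 0) = M p * vnorm (dx 0 p)"
    proof -
      have "0 < m p \<and> m p \<le> M p" using mM pI by blast
      hence "M p > 0" by linarith
      thus ?thesis unfolding dx_def by (simp add: vnorm_smult)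
    qed
    also have "SV 1 = (\<Sum>j\<in>{1..p-1}. \<beta> * opnorm (Mj j) * (vnorm (dx 1 j) + vnorm (dx (1-1) j)))"
      unfolding SV_def by (rule sum.cong) (auto simp: dx_def)
    finally show ?thesis using nG[of 1] nW[of 1] True by (simp add: algebra_simps)
  next
    case False
    hence k2: "k - 1 \<ge> 1" using k by simp
    have ueq: "u k = G k + (V (k-1) - V k) + (W k - W (k-1))"
      unfolding u_def G_def using RV[OF k] RV[OF k2] Wc[OF k] Wc[OF k2] by (intro eq_vecI) (auto simp: dg dR dVW)
    have "vnorm (u k) \<le> vnorm (G k) + vnorm (V (k-1) - V k) + vnorm (W k - W (k-1))"
      unfolding ueq by (rule tri3) (use Gc Vc Wc k k2 in auto)
    also have "vnorm (W k - W (k-1)) \<le> vnorm (W k) + vnorm (W (k-1))"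
      using Wc k k2 by (intro vnorm_minus[of _ N]) auto
    also have "vnorm (V (k-1) - V k) \<le> (\<Sum>j\<in>{1..p-1}. \<beta> * opnorm (Mj j) * (vnorm (dx k j) + vnorm (dx (k-1) j)))"
    proof -
      have "V (k-1) - V k = vsum N (\<lambda>j. t (k-1) j - t k j) {1..p-1}"
        unfolding V_def by (rule vsum_diff) (auto intro: tc)
      hence "vnorm (V (k-1) - V k) \<le> (\<Sum>j\<in>{1..p-1}. vnorm (t (k-1) j - t k j))"
        using vnorm_vsum[of "{1..p-1}" "\<lambda>j. t (k-1) j - t k j" N] tc by auto
      also have "\<dots> \<le> (\<Sum>j\<in>{1..p-1}. \<beta> * opnorm (Mj j) * (vnorm (dx k j) + vnorm (dx (k-1) j)))"
      proof (rule sum_mono)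
        fix j assume j: "j \<in> {1..p-1}"
        have "vnorm (t (k-1) j - t k j) \<le> vnorm (t (k-1) j) + vnorm (t k j)" using tc[OF j] by (intro vnorm_minus[of _ N])
        also have "\<dots> \<le> \<beta> * opnorm (Mj j) * vnorm (dx (k-1) j) + \<beta> * opnorm (Mj j) * vnorm (dx k j)"
          using nt[OF k2 j] nt[OF k j] by simp
        finally show "vnorm (t (k-1) j - t k j) \<le> \<beta> * opnorm (Mj j) * (vnorm (dx k j) + vnorm (dx (k-1) j))"
          by (simp add: algebra_simps)
      qed
      finally show ?thesis .
    qed
    finally show ?thesis using nG[OF k] nW[OF k] nW[OF k2] by (simp add: algebra_simps)
  qed
  have gam: "gamma_theta \<theta> \<ge> 0" unfolding gamma_theta_def using theta by simp
  have second: "gamma_theta \<theta> / (\<beta> * sigma_plus (A p)) * (vnorm (u k))\<^sup>2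
       \<le> gamma_theta \<theta> * (real p + 1) / (\<beta> * sigma_plus (A p)) *
          ((\<Sum>j\<in>{1..p-1}. \<beta>\<^sup>2 * (opnorm (transpose_mat (A p) * A j))\<^sup>2
                 * (vnorm (dx k j) + vnorm (dx (k-1) j))\<^sup>2)
           + (Lp\<^sup>2 + (M p)\<^sup>2) * (vnorm (dx k p) + vnorm (dx (k-1) p))\<^sup>2)" if k: "k \<ge> 1" for k
  proof -
    define a where "a = vnorm (dx k p)"
    define b where "b = vnorm (dx (k-1) p)"
    have ab: "a \<ge> 0" "b \<ge> 0" unfolding a_def b_def by (auto intro: vnorm_ge0)
    define C where "C j = \<beta> * opnorm (Mj j) * (vnorm (dx k j) + vnorm (dx (k-1) j))" for j
    define T where "T = (\<Sum>j\<in>{1..p-1}. \<beta>\<^sup>2 * (opnorm (transpose_mat (A p) * A j))\<^sup>2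
                 * (vnorm (dx k j) + vnorm (dx (k-1) j))\<^sup>2) + (Lp\<^sup>2 + (M p)\<^sup>2) * (a + b)\<^sup>2"
    have "vnorm (u k) \<le> (\<Sum>j\<in>{1..p-1}. C j) + \<bar>Lp\<bar> * a + M p * (a + b)"
      using bound[OF k] unfolding C_def a_def b_def .
    hence "(vnorm (u k))\<^sup>2 \<le> ((\<Sum>j\<in>{1..p-1}. C j) + \<bar>Lp\<bar> * a + M p * (a + b))\<^sup>2"
      using vnorm_ge0 by (intro power_mono) auto
    also have "\<dots> \<le> (real p + 1) * ((\<Sum>j\<in>{1..p-1}. (C j)\<^sup>2) + (\<bar>Lp\<bar> * a)\<^sup>2 + (M p * (a + b))\<^sup>2)"
      by (rule sq_bound[OF p2])
    also have "\<dots> \<le> (real p + 1) * T"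
    proof (rule mult_left_mono)
      have "(\<Sum>j\<in>{1..p-1}. (C j)\<^sup>2) = (\<Sum>j\<in>{1..p-1}. \<beta>\<^sup>2 * (opnorm (transpose_mat (A p) * A j))\<^sup>2
                 * (vnorm (dx k j) + vnorm (dx (k-1) j))\<^sup>2)"
        unfolding C_def Mj_def Apt_def by (simp add: power_mult_distrib)
      moreover have "(\<bar>Lp\<bar> * a)\<^sup>2 \<le> Lp\<^sup>2 * (a + b)\<^sup>2"
      proof -
        have "a\<^sup>2 \<le> (a + b)\<^sup>2" using ab by (intro power_mono) auto
        hence "Lp\<^sup>2 * a\<^sup>2 \<le> Lp\<^sup>2 * (a + b)\<^sup>2" by (intro mult_left_mono) auto
        thus ?thesis by (simp add: power_mult_distrib)
      qed
      moreover have "(M p * (a + b))\<^sup>2 = (M p)\<^sup>2 * (a + b)\<^sup>2" by (simp add: power_mult_distrib)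
      ultimately show "(\<Sum>j\<in>{1..p-1}. (C j)\<^sup>2) + (\<bar>Lp\<bar> * a)\<^sup>2 + (M p * (a + b))\<^sup>2 \<le> T"
        unfolding T_def by (simp add: algebra_simps)
    qed simp
    finally have uT: "(vnorm (u k))\<^sup>2 \<le> (real p + 1) * T" .
    have cpos: "gamma_theta \<theta> / (\<beta> * sigma_plus (A p)) \<ge> 0" using gam beta sigpos by simp
    have "gamma_theta \<theta> / (\<beta> * sigma_plus (A p)) * (vnorm (u k))\<^sup>2
        \<le> gamma_theta \<theta> / (\<beta> * sigma_plus (A p)) * ((real p + 1) * T)"
      by (rule mult_left_mono[OF uT cpos])
    thus ?thesis unfolding T_def a_def b_def by (simp add: field_simps)
  qed
  show ?thesis unfolding Let_def
    using first second unfolding dlam_def u_def dx_def R_def by blast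
qed


end
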